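(* Let the radius distribution $f\in\mathrm{RV}_{-1}$ satisfy, for all $\beta\in(0,1)$, $$\limsup_{n\to\infty}\sup_{n^\beta\le x\le n}\frac{xf(x)}{nf(n)}<\infty\quad\text{and}\quad\limsup_{n\to\infty}\frac{\sum_{i=1}^{n^\beta}f(i)}{f(n)\,n\ln n}<\infty.$$ Then $$\lim_{\alpha\to0}\limsup_{n\to\infty}\mathbb{P}(T_nf(n)<\alpha)=0.$$
   Context: Covering process: $R$ takes values in $\{1,2,\dots\}$, $f(r)=\mathbb{P}(R\ge r)$ for real $r\ge1$. On $\mathbb{Z}/n\mathbb{Z}$, let $(R_k)$ be i.i.d. copies of $R$, $(U_k)$ i.i.d. uniform on $\mathbb{Z}/n\mathbb{Z}$, independent; $\mathcal{O}_k=\{U_k,\dots,U_k+R_k-1\}$ (mod $n$), $C_0=\emptyset$, $C_k=C_{k-1}\cup\mathcal{O}_k$; with an independent rate-one Poisson process $N(t)$, $X_t=C_{N(t)}$ and $T_n=\inf\{t:X_t=\mathbb{Z}/n\mathbb{Z}\}$. $U\in\mathrm{RV}_p$ means $\lim_{x\to\infty}U(xt)/U(x)=t^p$ for all $t>0$. *)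

theory Defs
  imports "HOL-Probability.Probability"
begin

definition tailf :: "nat pmf \<Rightarrow> real \<Rightarrow> real" where
  "tailf R r = measure_pmf.prob R {k. r \<le> real k}"

definition RV :: "real \<Rightarrow> (real \<Rightarrow> real) \<Rightarrow> bool" where
  "RV p U \<longleftrightarrow> (\<forall>t>0. ((\<lambda>x. U (x * t) / U x) \<longlongrightarrow> t powr p) at_top)"

text \<open>One step of randomness: ((R_k, U_k), E_k), with R_k ~ R, U_k uniform on Z/nZ
  (represented by {0..<n}), and E_k ~ Exp(1) the k-th interarrival time of the
  rate-one Poisson process; all independent.\<close>
definition step_measure :: "nat pmf \<Rightarrow> nat \<Rightarrow> ((nat \<times> nat) \<times> real) measure" where
  "step_measure R n =
     measure_pmf (pair_pmf R (pmf_of_set {..<n})) \<Otimes>\<^sub>M density lborel (\<lambda>x. ennreal (exponential_density 1 x))"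

definition cov_space :: "nat pmf \<Rightarrow> nat \<Rightarrow> (nat \<Rightarrow> (nat \<times> nat) \<times> real) measure" where
  "cov_space R n = PiM UNIV (\<lambda>_. step_measure R n)"

definition arc :: "nat \<Rightarrow> nat \<Rightarrow> nat \<Rightarrow> nat set" where
  "arc n u r = {(u + j) mod n | j. j < r}"

text \<open>C_m = O_1 \<union> ... \<union> O_m (the k-th arc uses the step with index k-1).\<close>
definition covered :: "nat \<Rightarrow> (nat \<Rightarrow> (nat \<times> nat) \<times> real) \<Rightarrow> nat \<Rightarrow> nat set" where
  "covered n \<omega> m = (\<Union>k<m. arc n (snd (fst (\<omega> k))) (fst (fst (\<omega> k))))"

text \<open>Poisson process N(t): number of arrivals S_j = E_0 + ... + E_(j-1), j \<ge> 1, up to time t.\<close>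
definition poisson_count :: "(nat \<Rightarrow> (nat \<times> nat) \<times> real) \<Rightarrow> real \<Rightarrow> nat" where
  "poisson_count \<omega> t = card {j::nat. 1 \<le> j \<and> (\<Sum>i<j. snd (\<omega> i)) \<le> t}"

definition cover_time :: "nat \<Rightarrow> (nat \<Rightarrow> (nat \<times> nat) \<times> real) \<Rightarrow> real" where
  "cover_time n \<omega> = Inf {t. 0 \<le> t \<and> covered n \<omega> (poisson_count \<omega> t) = {..<n}}"

end

theory Submission
  imports Defs
begin

abbreviation EXD :: "real measure" where
  "EXD \<equiv> density lborel (\<lambda>x. ennreal (exponential_density 1 x))"

lemma prob_EXD: "prob_space EXD"
  using prob_space_exponential_density[of 1] by simp

lemma prob_step: "0 < n \<Longrightarrow> prob_space (step_measure R n)"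
  unfolding step_measure_def
  by (intro prob_space_pair prob_EXD) (auto intro: prob_space_measure_pmf)

lemma space_step[simp]: "space (step_measure R n) = UNIV"
  unfolding step_measure_def by (simp add: space_pair_measure)

lemma space_cov[simp]: "space (cov_space R n) = UNIV"
  unfolding cov_space_def by (simp add: space_PiM)

lemma pps: "0 < n \<Longrightarrow> product_prob_space (\<lambda>_::nat. step_measure R n)"
  by (metis prob_step product_prob_space.intro product_prob_space_axioms.intro product_sigma_finite.intro prob_space_imp_sigma_finite)

lemma prob_cov: "0 < n \<Longrightarrow> prob_space (cov_space R n)"
  unfolding cov_space_def using pps by (metis prob_space_PiM prob_step)

lemma nn_prod:
  assumes n: "0 < n" and g: "g \<in> borel_measurable (step_measure R n)"
  shows "(\<integral>\<^sup>+ \<omega>. (\<Prod>k<m. g (\<omega> k)) \<partial>cov_space R n) = (integral\<^sup>N (step_measure R n) g) ^ m"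
proof -
  interpret P: product_prob_space "\<lambda>_::nat. step_measure R n" using pps[OF n] .
  have "(\<integral>\<^sup>+ \<omega>. (\<Prod>k<m. g (\<omega> k)) \<partial>cov_space R n)
     = (\<integral>\<^sup>+ \<omega>. (\<Prod>k<m. g (\<omega> k)) \<partial>distr (cov_space R n) (PiM {..<m} (\<lambda>_. step_measure R n)) (\<lambda>x. restrict x {..<m}))"
    unfolding cov_space_def
    by (subst nn_integral_distr) (auto intro!: measurable_restrict borel_measurable_prod_ennreal measurable_compose[OF _ g] measurable_component_singleton)
  also have "\<dots> = (\<integral>\<^sup>+ \<omega>. (\<Prod>k<m. g (\<omega> k)) \<partial>PiM {..<m} (\<lambda>_. step_measure R n))"
    unfolding cov_space_def using product_prob_space.distr_PiM_restrict_finite[OF pps[OF n], of "{..<m}" UNIV] by simp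
  also have "\<dots> = (\<Prod>k<m. integral\<^sup>N (step_measure R n) g)"
    by (subst P.product_nn_integral_prod) (auto simp: g)
  finally show ?thesis by simp
qed

lemma step_eq: "step_measure R n = measure_pmf (pair_pmf R (pmf_of_set {..<n})) \<Otimes>\<^sub>M EXD"
  unfolding step_measure_def by simp

lemma meas_pmf[measurable]: "f \<in> borel_measurable (measure_pmf p)"
  by (simp add: measurable_cong_sets[OF sets_measure_pmf_count_space refl])

lemma nn_fst:
  assumes n: "0 < n"
  shows "(\<integral>\<^sup>+ s. g (fst s) \<partial>step_measure R n) = (\<integral>\<^sup>+ z. g z \<partial>measure_pmf (pair_pmf R (pmf_of_set {..<n})))"
proof -
  interpret E: prob_space EXD by (rule prob_EXD)
  have ps: "sigma_finite_measure EXD"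
    by (intro prob_space_imp_sigma_finite prob_EXD)
  have "(\<integral>\<^sup>+ s. g (fst s) \<partial>step_measure R n) = (\<integral>\<^sup>+ x. \<integral>\<^sup>+ y. g x \<partial>EXD \<partial>measure_pmf (pair_pmf R (pmf_of_set {..<n})))"
  proof -
    have "(\<lambda>s. g (fst s)) \<in> borel_measurable (measure_pmf (pair_pmf R (pmf_of_set {..<n})) \<Otimes>\<^sub>M EXD)"
      by (rule measurable_compose[OF measurable_fst meas_pmf])
    from sigma_finite_measure.nn_integral_fst[OF ps this] show ?thesis unfolding step_eq by simp
  qed
  also have "\<dots> = (\<integral>\<^sup>+ z. g z \<partial>measure_pmf (pair_pmf R (pmf_of_set {..<n})))"
    using E.emeasure_space_1 by simp
  finally show ?thesis .
qed

lemma nn_snd: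
  assumes n: "0 < n" and h: "h \<in> borel_measurable borel"
  shows "(\<integral>\<^sup>+ s. h (snd s) \<partial>step_measure R n) = (\<integral>\<^sup>+ x. h x \<partial>EXD)"
proof -
  interpret E: prob_space EXD by (rule prob_EXD)
  have ps: "sigma_finite_measure EXD"
    by (intro prob_space_imp_sigma_finite prob_EXD)
  have "(\<integral>\<^sup>+ s. h (snd s) \<partial>step_measure R n) = (\<integral>\<^sup>+ x. \<integral>\<^sup>+ y. h y \<partial>EXD \<partial>measure_pmf (pair_pmf R (pmf_of_set {..<n})))"
  proof -
    have "(\<lambda>s. h (snd s)) \<in> borel_measurable (measure_pmf (pair_pmf R (pmf_of_set {..<n})) \<Otimes>\<^sub>M EXD)"
      by (rule measurable_compose[OF measurable_snd], simp add: h)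
    from sigma_finite_measure.nn_integral_fst[OF ps this] show ?thesis unfolding step_eq by simp
  qed
  also have "\<dots> = (\<integral>\<^sup>+ x. h x \<partial>EXD)"
    using measure_pmf.emeasure_space_1[of "pair_pmf R (pmf_of_set {..<n})"] by simp
  finally show ?thesis .
qed

lemma exp_mgf:
  fixes a :: real assumes a: "a < 1"
  shows "(\<integral>\<^sup>+ x. ennreal (exp (a * x)) \<partial>EXD) = ennreal (1 / (1 - a))"
proof -
  have "(\<integral>\<^sup>+ x. ennreal (exp (a * x)) \<partial>EXD) = (\<integral>\<^sup>+ x. ennreal (exponential_density 1 x) * ennreal (exp (a * x)) \<partial>lborel)"
    by (subst nn_integral_density) auto
  also have "\<dots> = (\<integral>\<^sup>+ x. ennreal (1 / (1 - a)) * ennreal (exponential_density (1 - a) x) \<partial>lborel)"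
  proof (rule nn_integral_cong)
    fix x :: real
    have "exponential_density 1 x * exp (a * x) = 1 / (1 - a) * exponential_density (1 - a) x"
      using a by (auto simp: exponential_density_def exp_add[symmetric] algebra_simps field_simps)
    then show "ennreal (exponential_density 1 x) * ennreal (exp (a * x)) = ennreal (1 / (1 - a)) * ennreal (exponential_density (1 - a) x)"
      using a by (simp add: ennreal_mult'[symmetric] ennreal_mult[symmetric] exponential_density_nonneg)
  qed
  also have "\<dots> = ennreal (1 / (1 - a)) * (\<integral>\<^sup>+ x. ennreal (exponential_density (1 - a) x) \<partial>lborel)"
    by (subst nn_integral_cmult) auto
  also have "(\<integral>\<^sup>+ x. ennreal (exponential_density (1 - a) x) \<partial>lborel) = 1"
  proof -
    interpret D: prob_space "density lborel (exponential_density (1 - a))"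
      using prob_space_exponential_density[of "1 - a"] a by simp
    have "emeasure (density lborel (exponential_density (1 - a))) UNIV = 1"
      using D.emeasure_space_1 by simp
    then show ?thesis by (subst (asm) emeasure_density) auto
  qed
  finally show ?thesis by simp
qed

lemma sets_cov_fst: "{\<omega>. \<forall>k<m. fst (\<omega> k) \<in> B} \<in> sets (cov_space R n)"
proof -
  have "(\<lambda>\<omega>. fst (\<omega> k)) \<in> measurable (cov_space R n) (measure_pmf (pair_pmf R (pmf_of_set {..<n})))" for k
    unfolding cov_space_def step_measure_def
    by measurable
  then have "{\<omega>. fst (\<omega> k) \<in> B} \<in> sets (cov_space R n)" for k
    using measurable_sets[of "\<lambda>\<omega>. fst (\<omega> k)" "cov_space R n" "measure_pmf (pair_pmf R (pmf_of_set {..<n}))" B]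
    by (simp add: vimage_def)
  then have "{\<omega> \<in> space (cov_space R n). \<forall>k\<in>{..<m}. fst (\<omega> k) \<in> B} \<in> sets (cov_space R n)"
    by (intro sets.sets_Collect_finite_All) auto
  moreover have "{\<omega> \<in> space (cov_space R n). \<forall>k\<in>{..<m}. fst (\<omega> k) \<in> B} = {\<omega>. \<forall>k<m. fst (\<omega> k) \<in> B}"
    by auto
  ultimately show ?thesis by simp
qed

lemma prob_cov_fst:
  assumes n: "0 < n"
  shows "measure (cov_space R n) {\<omega>. \<forall>k<m. fst (\<omega> k) \<in> B} = measure_pmf.prob (pair_pmf R (pmf_of_set {..<n})) B ^ m"
proof -
  let ?P = "pair_pmf R (pmf_of_set {..<n})"
  have "emeasure (cov_space R n) {\<omega>. \<forall>k<m. fst (\<omega> k) \<in> B} = (\<integral>\<^sup>+ \<omega>. indicator {\<omega>. \<forall>k<m. fst (\<omega> k) \<in> B} \<omega> \<partial>cov_space R n)"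
    using sets_cov_fst by simp
  also have "\<dots> = (\<integral>\<^sup>+ \<omega>. (\<Prod>k<m. indicator B (fst (\<omega> k))) \<partial>cov_space R n)"
    by (rule nn_integral_cong) (auto simp: indicator_def)
  also have "\<dots> = (\<integral>\<^sup>+ s. indicator B (fst s) \<partial>step_measure R n) ^ m"
    by (rule nn_prod[OF n]) (rule measurable_compose[OF _ meas_pmf], simp add: step_measure_def)
  also have "(\<integral>\<^sup>+ s. indicator B (fst s) \<partial>step_measure R n) = emeasure (measure_pmf ?P) B"
    using nn_fst[OF n, where g="indicator B" and R=R] by simp
  finally have "emeasure (cov_space R n) {\<omega>. \<forall>k<m. fst (\<omega> k) \<in> B} = emeasure (measure_pmf ?P) B ^ m" .
  also have "emeasure (measure_pmf ?P) B ^ m = ennreal (measure_pmf.prob ?P B ^ m)"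
    by (simp add: measure_pmf.emeasure_eq_measure ennreal_power)
  finally show ?thesis
    by (simp add: measure_def)
qed

lemma meas_sum_snd[measurable]: "(\<lambda>\<omega>. \<Sum>i<j. snd (\<omega> i)) \<in> borel_measurable (cov_space R n)"
  unfolding cov_space_def step_measure_def by measurable

lemma nn_exp_sum:
  assumes n: "0 < n" and a: "a < 1"
  shows "(\<integral>\<^sup>+ \<omega>. ennreal (exp (a * (\<Sum>i<j. snd (\<omega> i)))) \<partial>cov_space R n) = ennreal (1 / (1 - a)) ^ j"
proof -
  have "(\<integral>\<^sup>+ \<omega>. ennreal (exp (a * (\<Sum>i<j. snd (\<omega> i)))) \<partial>cov_space R n)
      = (\<integral>\<^sup>+ \<omega>. (\<Prod>i<j. ennreal (exp (a * snd (\<omega> i)))) \<partial>cov_space R n)"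
    by (rule nn_integral_cong) (simp add: sum_distrib_left exp_sum prod_ennreal)
  also have "\<dots> = (\<integral>\<^sup>+ s. ennreal (exp (a * snd s)) \<partial>step_measure R n) ^ j"
    by (rule nn_prod[OF n]) (simp add: step_measure_def)
  also have "(\<integral>\<^sup>+ s. ennreal (exp (a * snd s)) \<partial>step_measure R n) = ennreal (1 / (1 - a))"
    using nn_snd[OF n, of "\<lambda>x. ennreal (exp (a * x))" R] exp_mgf[OF a] by simp
  finally show ?thesis .
qed

lemma chern_lo:
  assumes n: "0 < n"
  shows "measure (cov_space R n) {\<omega>. (\<Sum>i<j. snd (\<omega> i)) \<le> t} \<le> exp t / 2 ^ j"
proof -
  have S0: "{\<omega> \<in> space (cov_space R n). (\<Sum>i<j. snd (\<omega> i)) \<le> t} \<in> sets (cov_space R n)"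
    by measurable
  then have S: "{\<omega>. (\<Sum>i<j. snd (\<omega> i)) \<le> t} \<in> sets (cov_space R n)" by simp
  have "emeasure (cov_space R n) {\<omega>. (\<Sum>i<j. snd (\<omega> i)) \<le> t} = (\<integral>\<^sup>+ \<omega>. indicator {\<omega>. (\<Sum>i<j. snd (\<omega> i)) \<le> t} \<omega> \<partial>cov_space R n)"
    using S by simp
  also have "\<dots> \<le> (\<integral>\<^sup>+ \<omega>. ennreal (exp t) * ennreal (exp ((-1) * (\<Sum>i<j. snd (\<omega> i)))) \<partial>cov_space R n)"
  proof (rule nn_integral_mono)
    fix \<omega>
    show "indicator {\<omega>. (\<Sum>i<j. snd (\<omega> i)) \<le> t} \<omega> \<le> ennreal (exp t) * ennreal (exp ((-1) * (\<Sum>i<j. snd (\<omega> i))))"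
    proof (cases "(\<Sum>i<j. snd (\<omega> i)) \<le> t")
      case True
      then have "1 \<le> exp t * exp ((-1) * (\<Sum>i<j. snd (\<omega> i)))"
        by (simp add: exp_add[symmetric])
      then show ?thesis using True by (simp add: ennreal_mult[symmetric])
    qed simp
  qed
  also have "\<dots> = ennreal (exp t) * (\<integral>\<^sup>+ \<omega>. ennreal (exp ((-1) * (\<Sum>i<j. snd (\<omega> i)))) \<partial>cov_space R n)"
    by (rule nn_integral_cmult) measurable
  also have "\<dots> = ennreal (exp t) * ennreal (1 / (1 - (-1))) ^ j"
    by (subst nn_exp_sum[OF n]) simp_all
  also have "\<dots> = ennreal (exp t / 2 ^ j)"
    apply (subst ennreal_power, simp)
    apply (subst ennreal_mult[symmetric], simp, simp)
    apply (simp add: power_one_over)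
    done
  finally show ?thesis
    by (simp add: measure_def enn2real_leI)
qed

lemma chern_hi:
  assumes n: "0 < n"
  shows "measure (cov_space R n) {\<omega>. T < (\<Sum>i<j. snd (\<omega> i))} \<le> exp (- T / 2) * 2 ^ j"
proof -
  have S0: "{\<omega> \<in> space (cov_space R n). T < (\<Sum>i<j. snd (\<omega> i))} \<in> sets (cov_space R n)"
    by measurable
  then have S: "{\<omega>. T < (\<Sum>i<j. snd (\<omega> i))} \<in> sets (cov_space R n)" by simp
  have "emeasure (cov_space R n) {\<omega>. T < (\<Sum>i<j. snd (\<omega> i))} = (\<integral>\<^sup>+ \<omega>. indicator {\<omega>. T < (\<Sum>i<j. snd (\<omega> i))} \<omega> \<partial>cov_space R n)"
    using S by simp
  also have "\<dots> \<le> (\<integral>\<^sup>+ \<omega>. ennreal (exp (- T / 2)) * ennreal (exp ((1/2) * (\<Sum>i<j. snd (\<omega> i)))) \<partial>cov_space R n)"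
  proof (rule nn_integral_mono)
    fix \<omega>
    show "indicator {\<omega>. T < (\<Sum>i<j. snd (\<omega> i))} \<omega> \<le> ennreal (exp (- T / 2)) * ennreal (exp ((1/2) * (\<Sum>i<j. snd (\<omega> i))))"
    proof (cases "T < (\<Sum>i<j. snd (\<omega> i))")
      case True
      then have "1 \<le> exp (- T / 2) * exp ((1/2) * (\<Sum>i<j. snd (\<omega> i)))"
        by (simp add: exp_add[symmetric])
      then show ?thesis using True by (simp add: ennreal_mult[symmetric])
    qed simp
  qed
  also have "\<dots> = ennreal (exp (- T / 2)) * (\<integral>\<^sup>+ \<omega>. ennreal (exp ((1/2) * (\<Sum>i<j. snd (\<omega> i)))) \<partial>cov_space R n)"
    by (rule nn_integral_cmult) measurable
  also have "\<dots> = ennreal (exp (- T / 2)) * ennreal (1 / (1 - 1/2)) ^ j"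
    by (subst nn_exp_sum[OF n]) simp_all
  also have "\<dots> = ennreal (exp (- T / 2) * 2 ^ j)"
    apply (subst ennreal_power, simp)
    apply (subst ennreal_mult[symmetric], simp, simp)
    apply simp
    done
  finally show ?thesis
    by (simp add: measure_def enn2real_leI)
qed



definition phi :: "nat \<Rightarrow> nat \<Rightarrow> nat \<Rightarrow> nat" where
  "phi n x u = (if u \<le> x then x - u else x + n - u)"

lemma mod_lin: "0 < (n::nat) \<Longrightarrow> z < 2 * n \<Longrightarrow> z mod n = (if z < n then z else z - n)"
proof (cases "z < n")
  case False
  assume "0 < n" "z < 2 * n"
  then have "z mod n = (z - n) mod n" using False by (simp add: le_mod_geq)
  also have "\<dots> = z - n" using False \<open>z < 2 * n\<close> by simp
  finally show ?thesis using False by simp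
qed simp

lemma arc_iff:
  assumes n: "0 < n" and x: "x < n" and u: "u < n"
  shows "x \<in> arc n u r \<longleftrightarrow> phi n x u < r"
proof
  assume "x \<in> arc n u r"
  then obtain j where j: "j < r" "(u + j) mod n = x" by (auto simp: arc_def)
  define k where "k = j mod n"
  have "(u + k) mod n = x" using j(2) by (simp add: k_def mod_add_right_eq)
  moreover have kn: "k < n" using n by (simp add: k_def)
  moreover have "u + k < 2 * n" using u kn by simp
  ultimately have xe: "x = (if u + k < n then u + k else u + k - n)" using mod_lin[OF n] by metis
  have "phi n x u = k" using xe u kn unfolding phi_def by (cases "u + k < n") auto
  moreover have "k \<le> j" by (simp add: k_def)
  ultimately show "phi n x u < r" using j(1) by linarith
next
  assume h: "phi n x u < r"
  have "u + phi n x u < 2 * n" using u x by (auto simp: phi_def)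
  then have "(u + phi n x u) mod n = x" using mod_lin[OF n, of "u + phi n x u"] x u
    by (auto simp: phi_def)
  then show "x \<in> arc n u r" using h unfolding arc_def by (metis (mono_tags, lifting) mem_Collect_eq)
qed

lemma phi_lt: "x < n \<Longrightarrow> u < n \<Longrightarrow> phi n x u < n"
  by (auto simp: phi_def)

lemma phi_inv: "x < n \<Longrightarrow> u < n \<Longrightarrow> phi n x (phi n x u) = u"
  by (auto simp: phi_def)

lemma card_arc:
  assumes n: "0 < n" and x: "x < n"
  shows "card {u \<in> {..<n}. x \<in> arc n u r} = min r n"
proof -
  have A: "{u \<in> {..<n}. x \<in> arc n u r} = {u \<in> {..<n}. phi n x u < r}"
    using arc_iff[OF n x] by auto
  have inj: "inj_on (phi n x) {u \<in> {..<n}. phi n x u < r}"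
    by (rule inj_onI) (metis (no_types, lifting) lessThan_iff mem_Collect_eq phi_inv x)
  have img: "phi n x ` {u \<in> {..<n}. phi n x u < r} = {v \<in> {..<n}. v < r}"
  proof
    show "phi n x ` {u \<in> {..<n}. phi n x u < r} \<subseteq> {v \<in> {..<n}. v < r}"
      using phi_lt[OF x] by auto
    show "{v \<in> {..<n}. v < r} \<subseteq> phi n x ` {u \<in> {..<n}. phi n x u < r}"
    proof
      fix v assume v: "v \<in> {v \<in> {..<n}. v < r}"
      then have "phi n x (phi n x v) = v" "phi n x v < n" using phi_inv[OF x] phi_lt[OF x] by auto
      then show "v \<in> phi n x ` {u \<in> {..<n}. phi n x u < r}" using v
        by (metis (mono_tags, lifting) image_eqI lessThan_iff mem_Collect_eq)
    qed
  qed
  have "{v \<in> {..<n}. v < r} = {..<min r n}" by auto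
  then show ?thesis using A card_image[OF inj] img by simp
qed

definition cdist :: "nat \<Rightarrow> nat \<Rightarrow> nat \<Rightarrow> nat" where
  "cdist n x y = (let d = (if x \<le> y then y - x else y + n - x) in min d (n - d))"

lemma pair_arc:
  assumes n: "0 < n" and x: "x < n" and y: "y < n" and xy: "x \<noteq> y" and u: "u < n"
    and hx: "x \<in> arc n u r" and hy: "y \<in> arc n u r"
  shows "cdist n x y < r"
proof -
  have "phi n x u < r" "phi n y u < r" using arc_iff[OF n x u] arc_iff[OF n y u] hx hy by auto
  then show ?thesis using x y xy u unfolding cdist_def phi_def Let_def by (auto split: if_splits)
qed

lemma tail_sum:
  fixes n :: nat and thr :: "nat \<Rightarrow> nat"
  shows "(\<integral>\<^sup>+ r. ennreal (real (card {i\<in>{1..n}. thr i \<le> r})) \<partial>measure_pmf R)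
     = ennreal (\<Sum>i=1..n. tailf R (real (thr i)))"
proof -
  have "(\<integral>\<^sup>+ r. ennreal (real (card {i\<in>{1..n}. thr i \<le> r})) \<partial>measure_pmf R)
      = (\<integral>\<^sup>+ r. (\<Sum>i\<in>{1..n}. indicator {r. thr i \<le> r} r) \<partial>measure_pmf R)"
  proof (rule nn_integral_cong)
    fix r :: nat
    have "(\<Sum>i\<in>{1..n}. if thr i \<le> r then 1 else (0::real)) = (\<Sum>i\<in>{i\<in>{1..n}. thr i \<le> r}. 1)"
      by (rule sum.inter_filter[symmetric]) simp
    then have eq: "real (card {i\<in>{1..n}. thr i \<le> r}) = (\<Sum>i\<in>{1..n}. if thr i \<le> r then 1 else 0)"
      by simp
    have "(\<Sum>i\<in>{1..n}. indicator {r. thr i \<le> r} r) = (\<Sum>i\<in>{1..n}. ennreal (if thr i \<le> r then 1 else 0))"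
      by (intro sum.cong) (auto simp: indicator_def)
    also have "\<dots> = ennreal (\<Sum>i\<in>{1..n}. if thr i \<le> r then 1 else 0)"
      by (rule sum_ennreal) simp
    finally show "ennreal (real (card {i\<in>{1..n}. thr i \<le> r})) = (\<Sum>i\<in>{1..n}. indicator {r. thr i \<le> r} r)"
      using eq by simp
  qed
  also have "\<dots> = (\<Sum>i\<in>{1..n}. emeasure (measure_pmf R) {r. thr i \<le> r})"
    by (subst nn_integral_sum) auto
  also have "\<dots> = (\<Sum>i\<in>{1..n}. ennreal (tailf R (real (thr i))))"
    by (simp add: tailf_def measure_pmf.emeasure_eq_measure)
  also have "\<dots> = ennreal (\<Sum>i=1..n. tailf R (real (thr i)))"
    by (rule sum_ennreal) (simp add: tailf_def)
  finally show ?thesis .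
qed

lemma emeasure_pair_pmf_sec:
  "emeasure (measure_pmf (pair_pmf A B)) S = (\<integral>\<^sup>+ a. emeasure (measure_pmf B) {b. (a, b) \<in> S} \<partial>measure_pmf A)"
proof -
  have "emeasure (measure_pmf (pair_pmf A B)) S = (\<integral>\<^sup>+ z. indicator S z \<partial>measure_pmf (pair_pmf A B))"
    by simp
  also have "\<dots> = (\<integral>\<^sup>+ a. \<integral>\<^sup>+ b. indicator S (a, b) \<partial>measure_pmf B \<partial>measure_pmf A)"
    by (rule nn_integral_pair_pmf')
  also have "\<dots> = (\<integral>\<^sup>+ a. emeasure (measure_pmf B) {b. (a, b) \<in> S} \<partial>measure_pmf A)"
  proof (rule nn_integral_cong)
    fix a
    have "(\<lambda>b. indicator S (a, b)) = (indicator {b. (a, b) \<in> S} :: _ \<Rightarrow> ennreal)"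
      by (auto simp: indicator_def)
    then show "(\<integral>\<^sup>+ b. indicator S (a, b) \<partial>measure_pmf B) = emeasure (measure_pmf B) {b. (a, b) \<in> S}"
      by simp
  qed
  finally show ?thesis .
qed

lemma emeasure_unif:
  assumes "0 < n"
  shows "emeasure (measure_pmf (pmf_of_set {..<n})) A = ennreal (real (card ({..<n} \<inter> A)) / real n)"
  using assms by (subst measure_pmf.emeasure_eq_measure) (subst measure_pmf_of_set, auto)

definition S1 :: "nat \<Rightarrow> nat \<Rightarrow> (nat \<times> nat) set" where
  "S1 n x = {z. x \<in> arc n (snd z) (fst z)}"

lemma prob_S1:
  assumes n: "0 < n" and x: "x < n"
  shows "measure_pmf.prob (pair_pmf R (pmf_of_set {..<n})) (S1 n x) = (\<Sum>i=1..n. tailf R (real i)) / real n"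
proof -
  have "emeasure (measure_pmf (pair_pmf R (pmf_of_set {..<n}))) (S1 n x)
      = (\<integral>\<^sup>+ r. ennreal (real (card {i\<in>{1..n}. i \<le> r})) * ennreal (1 / real n) \<partial>measure_pmf R)"
    unfolding emeasure_pair_pmf_sec
  proof (rule nn_integral_cong)
    fix r
    have "{..<n} \<inter> {b. (r, b) \<in> S1 n x} = {u \<in> {..<n}. x \<in> arc n u r}" by (auto simp: S1_def)
    moreover have "card {i\<in>{1..n}. i \<le> r} = min r n"
    proof -
      have "{i\<in>{1..n}. i \<le> r} = {1..min r n}" by auto
      then show ?thesis by simp
    qed
    ultimately show "emeasure (measure_pmf (pmf_of_set {..<n})) {b. (r, b) \<in> S1 n x} = ennreal (real (card {i\<in>{1..n}. i \<le> r})) * ennreal (1 / real n)"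
      using card_arc[OF n x, of r] n by (simp add: emeasure_unif ennreal_mult[symmetric])
  qed
  also have "\<dots> = ennreal (\<Sum>i=1..n. tailf R (real i)) * ennreal (1 / real n)"
    using tail_sum[where n=n and thr="\<lambda>i. i" and R=R] by (simp add: nn_integral_multc)
  also have "\<dots> = ennreal ((\<Sum>i=1..n. tailf R (real i)) / real n)"
    by (simp add: ennreal_mult[symmetric] tailf_def sum_nonneg divide_inverse)
  finally show ?thesis
    by (simp add: measure_pmf.emeasure_eq_measure tailf_def sum_nonneg)
qed

definition Qf :: "nat pmf \<Rightarrow> nat \<Rightarrow> nat \<Rightarrow> real" where
  "Qf R n d = (\<Sum>i=1..n. tailf R (real (max i (d + 1)))) / real n"

lemma prob_S1_pair:
  assumes n: "0 < n" and x: "x < n" and y: "y < n" and xy: "x \<noteq> y"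
  shows "measure_pmf.prob (pair_pmf R (pmf_of_set {..<n})) (S1 n x \<inter> S1 n y) \<le> Qf R n (cdist n x y)"
proof -
  let ?d = "cdist n x y"
  have dn: "?d + 1 \<le> n" using x y xy by (auto simp: cdist_def Let_def)
  have "emeasure (measure_pmf (pair_pmf R (pmf_of_set {..<n}))) (S1 n x \<inter> S1 n y)
      \<le> (\<integral>\<^sup>+ r. ennreal (real (card {i\<in>{1..n}. max i (?d + 1) \<le> r})) * ennreal (1 / real n) \<partial>measure_pmf R)"
    unfolding emeasure_pair_pmf_sec
  proof (rule nn_integral_mono)
    fix r
    have E: "{..<n} \<inter> {b. (r, b) \<in> S1 n x \<inter> S1 n y} = {u \<in> {..<n}. x \<in> arc n u r \<and> y \<in> arc n u r}"
      by (auto simp: S1_def)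
    show "emeasure (measure_pmf (pmf_of_set {..<n})) {b. (r, b) \<in> S1 n x \<inter> S1 n y} \<le> ennreal (real (card {i\<in>{1..n}. max i (?d + 1) \<le> r})) * ennreal (1 / real n)"
    proof (cases "?d < r")
      case True
      have "{i\<in>{1..n}. max i (?d + 1) \<le> r} = {1..min r n}" using True by auto
      then have c: "card {i\<in>{1..n}. max i (?d + 1) \<le> r} = min r n" by simp
      have "card {u \<in> {..<n}. x \<in> arc n u r \<and> y \<in> arc n u r} \<le> card {u \<in> {..<n}. x \<in> arc n u r}"
        by (rule card_mono) auto
      then have "real (card {u \<in> {..<n}. x \<in> arc n u r \<and> y \<in> arc n u r}) / real n \<le> real (min r n) / real n"
        using card_arc[OF n x, of r] by (simp add: divide_right_mono)
      then have "ennreal (real (card {u \<in> {..<n}. x \<in> arc n u r \<and> y \<in> arc n u r}) / real n) \<le> ennreal (real (min r n) / real n)"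
        by (rule ennreal_leI)
      also have "ennreal (real (min r n) / real n) = ennreal (real (card {i\<in>{1..n}. max i (?d + 1) \<le> r})) * ennreal (1 / real n)"
        by (subst c) (simp add: ennreal_mult[symmetric])
      finally show ?thesis using n by (simp only: emeasure_unif E)
    next
      case False
      have "{u \<in> {..<n}. x \<in> arc n u r \<and> y \<in> arc n u r} = {}"
        using pair_arc[OF n x y xy] False by auto
      then have E0: "{..<n} \<inter> {b. (r, b) \<in> S1 n x \<inter> S1 n y} = {}" using E by simp
      show ?thesis by (subst emeasure_unif[OF n]) (simp only: E0, simp)
    qed
  qed
  also have "\<dots> = ennreal (\<Sum>i=1..n. tailf R (real (max i (?d + 1)))) * ennreal (1 / real n)"
    using tail_sum[where n=n and thr="\<lambda>i. max i (?d + 1)" and R=R] by (simp add: nn_integral_multc)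
  also have "\<dots> = ennreal (Qf R n ?d)"
    by (simp add: Qf_def ennreal_mult[symmetric] tailf_def sum_nonneg divide_inverse)
  finally show ?thesis
    by (simp add: measure_pmf.emeasure_eq_measure Qf_def tailf_def sum_nonneg)
qed



lemma (in prob_space) second_moment:
  assumes fin: "finite I" and A: "\<And>x. x \<in> I \<Longrightarrow> A x \<in> events"
  shows "prob {\<omega>\<in>space M. \<forall>x\<in>I. \<omega> \<notin> A x} * (\<Sum>x\<in>I. prob (A x))\<^sup>2
           \<le> (\<Sum>x\<in>I. \<Sum>y\<in>I. prob (A x \<inter> A y)) - (\<Sum>x\<in>I. prob (A x))\<^sup>2"
proof -
  define \<mu> where "\<mu> = (\<Sum>x\<in>I. prob (A x))"
  define X where "X \<omega> = (\<Sum>x\<in>I. indicator (A x) \<omega> :: real)" for \<omega>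
  define Z where "Z = {\<omega>\<in>space M. \<forall>x\<in>I. \<omega> \<notin> A x}"
  have Xm[measurable]: "X \<in> borel_measurable M"
    unfolding X_def using A by (intro borel_measurable_sum) auto
  have Xb: "\<bar>X \<omega>\<bar> \<le> real (card I)" for \<omega>
  proof -
    have "\<bar>X \<omega>\<bar> = X \<omega>" unfolding X_def by (simp add: sum_nonneg)
    also have "X \<omega> \<le> (\<Sum>x\<in>I. 1)" unfolding X_def by (intro sum_mono) (simp add: indicator_def)
    finally show ?thesis by simp
  qed
  have intX: "integrable M X"
    by (rule integrable_const_bound[where B="real (card I)"]) (auto simp: Xb)
  have intX2: "integrable M (\<lambda>\<omega>. (X \<omega>)\<^sup>2)"
  proof (rule integrable_const_bound[where B="real (card I) ^ 2"])
    have "(X x)\<^sup>2 \<le> real (card I) ^ 2" for x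
      using power_mono[OF Xb[of x] abs_ge_zero, of 2] by simp
    then show "AE x in M. norm ((X x)\<^sup>2) \<le> real (card I) ^ 2" by simp
  qed simp
  have ZS: "Z \<in> events"
    unfolding Z_def using A fin by (intro sets.sets_Collect_finite_All) auto
  have EX: "expectation X = \<mu>"
    unfolding X_def \<mu>_def using A
    by (simp add: integral_sum emeasure_eq_measure)
  have EX2: "expectation (\<lambda>\<omega>. (X \<omega>)\<^sup>2) = (\<Sum>x\<in>I. \<Sum>y\<in>I. prob (A x \<inter> A y))"
  proof -
    have "(\<lambda>\<omega>. (X \<omega>)\<^sup>2) = (\<lambda>\<omega>. \<Sum>x\<in>I. \<Sum>y\<in>I. indicator (A x \<inter> A y) \<omega>)"
      unfolding X_def power2_eq_square sum_product
      by (auto simp: indicator_inter_arith)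
    then show ?thesis using A
      by (simp add: integral_sum emeasure_eq_measure)
  qed
  have "expectation (\<lambda>\<omega>. (X \<omega> - \<mu>)\<^sup>2) = expectation (\<lambda>\<omega>. (X \<omega>)\<^sup>2 - 2 * \<mu> * X \<omega> + \<mu>\<^sup>2)"
    by (rule Bochner_Integration.integral_cong) (auto simp: power2_diff)
  also have "\<dots> = expectation (\<lambda>\<omega>. (X \<omega>)\<^sup>2) - 2 * \<mu> * expectation X + \<mu>\<^sup>2"
    using intX intX2 by (simp add: prob_space)
  also have "\<dots> = (\<Sum>x\<in>I. \<Sum>y\<in>I. prob (A x \<inter> A y)) - \<mu>\<^sup>2"
    unfolding EX EX2 by (simp add: power2_eq_square)
  finally have V: "expectation (\<lambda>\<omega>. (X \<omega> - \<mu>)\<^sup>2) = (\<Sum>x\<in>I. \<Sum>y\<in>I. prob (A x \<inter> A y)) - \<mu>\<^sup>2" .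
  have "prob Z * \<mu>\<^sup>2 = expectation (\<lambda>\<omega>. \<mu>\<^sup>2 * indicator Z \<omega>)"
    using ZS by (simp add: emeasure_eq_measure)
  also have "\<dots> \<le> expectation (\<lambda>\<omega>. (X \<omega> - \<mu>)\<^sup>2)"
  proof (rule integral_mono)
    show "integrable M (\<lambda>\<omega>. \<mu>\<^sup>2 * indicator Z \<omega>)" using ZS by (simp add: emeasure_eq_measure)
    show "integrable M (\<lambda>\<omega>. (X \<omega> - \<mu>)\<^sup>2)"
      using intX intX2 by (simp add: power2_diff)
    fix \<omega> assume "\<omega> \<in> space M"
    show "\<mu>\<^sup>2 * indicator Z \<omega> \<le> (X \<omega> - \<mu>)\<^sup>2"
    proof (cases "\<omega> \<in> Z")
      case True
      then have "X \<omega> = 0" unfolding X_def Z_def by (auto intro!: sum.neutral)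
      then show ?thesis using True by simp
    qed simp
  qed
  finally show ?thesis using V unfolding Z_def \<mu>_def by simp
qed



lemma measure_le_superset:
  assumes "finite_measure M" "B \<in> sets M" "A \<subseteq> B"
  shows "measure M A \<le> measure M B"
proof (cases "A \<in> sets M")
  case True then show ?thesis using assms by (intro finite_measure.finite_measure_mono) auto
next
  case False then show ?thesis by (simp add: measure_notin_sets)
qed

lemma pmf_compl: "measure_pmf.prob p (- A) = 1 - measure_pmf.prob p A"
  using measure_pmf.prob_compl[of A p] by (simp add: Compl_eq_Diff_UNIV)

lemma pmf_union: "measure_pmf.prob p (A \<union> B) = measure_pmf.prob p A + measure_pmf.prob p B - measure_pmf.prob p (A \<inter> B)"
  by (rule measure_Un3) (auto simp: fmeasurable_def measure_pmf.emeasure_eq_measure)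

lemma unc_iff: "x \<notin> covered n \<omega> m \<longleftrightarrow> (\<forall>k<m. fst (\<omega> k) \<in> - S1 n x)"
  by (auto simp: covered_def S1_def)

definition Unc :: "nat \<Rightarrow> nat \<Rightarrow> nat \<Rightarrow> (nat \<Rightarrow> (nat \<times> nat) \<times> real) set" where
  "Unc n m x = {\<omega>. x \<notin> covered n \<omega> m}"

lemma Unc_eq: "Unc n m x = {\<omega>. \<forall>k<m. fst (\<omega> k) \<in> - S1 n x}"
  by (auto simp: Unc_def unc_iff)

lemma Unc2_eq: "Unc n m x \<inter> Unc n m y = {\<omega>. \<forall>k<m. fst (\<omega> k) \<in> - (S1 n x \<union> S1 n y)}"
  by (auto simp: Unc_eq)

lemma Unc_sets: "Unc n m x \<in> sets (cov_space R n)"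
  unfolding Unc_eq by (rule sets_cov_fst)

abbreviation pp :: "nat pmf \<Rightarrow> nat \<Rightarrow> real" where
  "pp R n \<equiv> (\<Sum>i=1..n. tailf R (real i)) / real n"

lemma prob_Unc:
  assumes n: "0 < n" and x: "x < n"
  shows "measure (cov_space R n) (Unc n m x) = (1 - pp R n) ^ m"
  unfolding Unc_eq prob_cov_fst[OF n] pmf_compl prob_S1[OF n x] ..

lemma scalar_ineq:
  fixes p Q :: real and m :: nat
  assumes "0 \<le> 1 - 2 * p + Q" "(1 - p)\<^sup>2 \<ge> 1/2" "0 \<le> Q"
  shows "(1 - 2 * p + Q) ^ m \<le> ((1 - p) ^ m)\<^sup>2 * exp (2 * real m * Q)"
proof -
  have pos: "(1 - p)\<^sup>2 > 0" using assms(2) by linarith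
  have e1: "(1 - p)\<^sup>2 * (1 + Q / (1 - p)\<^sup>2) = (1 - p)\<^sup>2 + Q"
    using pos by (simp add: field_simps)
  have e2: "(1 - p)\<^sup>2 = 1 - 2 * p + p\<^sup>2" by (simp add: power2_diff)
  have "1 - 2 * p + Q \<le> (1 - p)\<^sup>2 * (1 + Q / (1 - p)\<^sup>2)"
    unfolding e1 using e2 zero_le_power2[of p] by linarith
  also have "\<dots> \<le> (1 - p)\<^sup>2 * exp (Q / (1 - p)\<^sup>2)"
    using pos by (intro mult_left_mono) (auto simp: add.commute exp_ge_add_one_self)
  also have "\<dots> \<le> (1 - p)\<^sup>2 * exp (2 * Q)"
  proof -
    have "Q / (1 - p)\<^sup>2 \<le> 2 * Q"
    proof -
      have "Q * 1 \<le> Q * (2 * (1 - p)\<^sup>2)"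
        using assms(2,3) by (intro mult_left_mono) auto
      then show ?thesis using pos by (simp add: divide_le_eq mult_ac)
    qed
    then show ?thesis using pos by (intro mult_left_mono) auto
  qed
  finally have b: "1 - 2 * p + Q \<le> (1 - p)\<^sup>2 * exp (2 * Q)" .
  have "(1 - 2 * p + Q) ^ m \<le> ((1 - p)\<^sup>2 * exp (2 * Q)) ^ m"
    by (rule power_mono[OF b assms(1)])
  also have "\<dots> = ((1 - p) ^ m)\<^sup>2 * exp (2 * real m * Q)"
    by (simp add: power_mult_distrib exp_of_nat_mult[symmetric] power_even_eq[symmetric] mult_ac flip: power_mult)
  finally show ?thesis .
qed

lemma sum_cdist:
  fixes G :: "nat \<Rightarrow> real"
  assumes x: "x < n" and G: "\<And>d. 0 \<le> G d"
  shows "(\<Sum>y\<in>{..<n}-{x}. G (cdist n x y)) \<le> 2 * (\<Sum>d=1..n-1. G d)"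
proof -
  define dd where "dd y = (if x \<le> y then y - x else y + n - x)" for y
  have inj: "inj_on dd ({..<n}-{x})"
    using x by (intro inj_onI) (auto simp: dd_def split: if_splits)
  have img: "dd ` ({..<n}-{x}) \<subseteq> {1..n-1}"
    using x by (auto simp: dd_def)
  have "(\<Sum>y\<in>{..<n}-{x}. G (cdist n x y)) \<le> (\<Sum>y\<in>{..<n}-{x}. G (dd y) + G (n - dd y))"
  proof (rule sum_mono)
    fix y
    have "cdist n x y = min (dd y) (n - dd y)" by (simp add: cdist_def dd_def Let_def)
    then show "G (cdist n x y) \<le> G (dd y) + G (n - dd y)"
      using G[of "dd y"] G[of "n - dd y"] by (cases "dd y \<le> n - dd y") (auto simp: min_def)
  qed
  also have "\<dots> = (\<Sum>d\<in>dd ` ({..<n}-{x}). G d + G (n - d))"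
    by (rule sum.reindex[OF inj, symmetric, unfolded comp_def])
  also have "\<dots> \<le> (\<Sum>d=1..n-1. G d + G (n - d))"
    by (rule sum_mono2[OF _ img]) (auto intro: add_nonneg_nonneg G)
  also have "\<dots> = (\<Sum>d=1..n-1. G d) + (\<Sum>d=1..n-1. G (n - d))"
    by (rule sum.distrib)
  also have "(\<Sum>d=1..n-1. G (n - d)) = (\<Sum>d=1..n-1. G d)"
  proof -
    have "(\<Sum>d=1..n-1. G d) = (\<Sum>d=1..n-1. G (n - 1 + 1 - d))"
      by (rule sum.atLeastAtMost_rev)
    also have "\<dots> = (\<Sum>d=1..n-1. G (n - d))"
      by (rule sum.cong) auto
    finally show ?thesis by simp
  qed
  finally show ?thesis by simp
qed

lemma Qf_nonneg: "0 \<le> Qf R n d"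
  by (simp add: Qf_def tailf_def sum_nonneg)

lemma pp_le1:
  assumes n: "0 < n" shows "pp R n \<le> 1"
  using prob_S1[OF n n, of R] measure_pmf.prob_le_1 by metis

lemma cover_bound:
  assumes n: "0 < n" and pb: "(1 - pp R n)\<^sup>2 \<ge> 1/2"
  shows "measure (cov_space R n) {\<omega>. covered n \<omega> m = {..<n}}
     \<le> 1 / (real n * (1 - pp R n) ^ m) + 2 / real n * (\<Sum>d=1..n-1. exp (2 * real m * Qf R n d) - 1)"
proof -
  interpret P: prob_space "cov_space R n" by (rule prob_cov[OF n])
  define p where "p = pp R n"
  define a where "a = (1 - p) ^ m"
  define G where "G d = exp (2 * real m * Qf R n d) - 1" for d
  have G0: "0 \<le> G d" for d
    unfolding G_def using Qf_nonneg[of R n d] by simp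
  have p1: "p \<le> 1" unfolding p_def by (rule pp_le1[OF n])
  have p1': "0 < 1 - p"
  proof -
    have "(1 - p)\<^sup>2 > 0" using pb unfolding p_def by linarith
    then have "1 - p \<noteq> 0" by auto
    then show ?thesis using p1 by linarith
  qed
  have a0: "0 < a" unfolding a_def using p1' by simp
  define \<mu> where "\<mu> = (\<Sum>x\<in>{..<n}. P.prob (Unc n m x))"
  have mu: "\<mu> = real n * a"
    unfolding \<mu>_def a_def p_def by (simp add: prob_Unc[OF n])
  define Z where "Z = {\<omega>\<in>space (cov_space R n). \<forall>x\<in>{..<n}. \<omega> \<notin> Unc n m x}"
  have SM: "P.prob Z * \<mu>\<^sup>2 \<le> (\<Sum>x\<in>{..<n}. \<Sum>y\<in>{..<n}. P.prob (Unc n m x \<inter> Unc n m y)) - \<mu>\<^sup>2"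
    unfolding Z_def \<mu>_def by (rule P.second_moment) (auto simp: Unc_sets)
  have row: "(\<Sum>y\<in>{..<n}. P.prob (Unc n m x \<inter> Unc n m y)) \<le> a + a\<^sup>2 * (real (n - 1) + 2 * (\<Sum>d=1..n-1. G d))"
    if x: "x < n" for x
  proof -
    have "(\<Sum>y\<in>{..<n}. P.prob (Unc n m x \<inter> Unc n m y)) = P.prob (Unc n m x \<inter> Unc n m x) + (\<Sum>y\<in>{..<n}-{x}. P.prob (Unc n m x \<inter> Unc n m y))"
      using x by (subst sum.remove[of _ x]) auto
    also have "P.prob (Unc n m x \<inter> Unc n m x) = a"
      using prob_Unc[OF n x] unfolding a_def p_def by simp
    also have "(\<Sum>y\<in>{..<n}-{x}. P.prob (Unc n m x \<inter> Unc n m y)) \<le> (\<Sum>y\<in>{..<n}-{x}. a\<^sup>2 * (1 + G (cdist n x y)))"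
    proof (rule sum_mono)
      fix y assume y: "y \<in> {..<n}-{x}"
      let ?P0 = "pair_pmf R (pmf_of_set {..<n})"
      let ?q = "measure_pmf.prob ?P0 (S1 n x \<inter> S1 n y)"
      have yn: "y < n" using y by simp
      have "P.prob (Unc n m x \<inter> Unc n m y) = (measure_pmf.prob ?P0 (- (S1 n x \<union> S1 n y))) ^ m"
        unfolding Unc2_eq by (rule prob_cov_fst[OF n])
      also have "measure_pmf.prob ?P0 (- (S1 n x \<union> S1 n y)) = 1 - 2 * p + ?q"
        unfolding pmf_compl pmf_union prob_S1[OF n x] prob_S1[OF n yn] using y unfolding p_def by simp
      finally have e: "P.prob (Unc n m x \<inter> Unc n m y) = (1 - 2 * p + ?q) ^ m" .
      have q0: "0 \<le> 1 - 2 * p + ?q"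
        using measure_nonneg[of "measure_pmf ?P0" "- (S1 n x \<union> S1 n y)"]
        unfolding pmf_compl pmf_union prob_S1[OF n x] prob_S1[OF n yn] using y unfolding p_def by simp
      have qQ: "?q \<le> Qf R n (cdist n x y)"
        using prob_S1_pair[OF n x, of y R] y by auto
      have "(1 - 2 * p + ?q) ^ m \<le> (1 - 2 * p + Qf R n (cdist n x y)) ^ m"
        using q0 qQ by (intro power_mono) auto
      also have "\<dots> \<le> ((1 - p) ^ m)\<^sup>2 * exp (2 * real m * Qf R n (cdist n x y))"
        by (rule scalar_ineq) (use q0 qQ pb Qf_nonneg in \<open>auto simp: p_def\<close>)
      also have "\<dots> = a\<^sup>2 * (1 + G (cdist n x y))"
        unfolding a_def G_def by simp
      finally show "P.prob (Unc n m x \<inter> Unc n m y) \<le> a\<^sup>2 * (1 + G (cdist n x y))"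
        using e by simp
    qed
    also have "(\<Sum>y\<in>{..<n}-{x}. a\<^sup>2 * (1 + G (cdist n x y))) = a\<^sup>2 * (real (n - 1) + (\<Sum>y\<in>{..<n}-{x}. G (cdist n x y)))"
      using x by (simp add: sum_distrib_left[symmetric] sum.distrib card_Diff_singleton)
    also have "\<dots> \<le> a\<^sup>2 * (real (n - 1) + 2 * (\<Sum>d=1..n-1. G d))"
      using sum_cdist[OF x G0] by (intro mult_left_mono) auto
    finally show ?thesis by simp
  qed
  have S2: "(\<Sum>x\<in>{..<n}. \<Sum>y\<in>{..<n}. P.prob (Unc n m x \<inter> Unc n m y)) \<le> real n * (a + a\<^sup>2 * (real (n - 1) + 2 * (\<Sum>d=1..n-1. G d)))"
    using sum_mono[of "{..<n}" "\<lambda>x. \<Sum>y\<in>{..<n}. P.prob (Unc n m x \<inter> Unc n m y)" "\<lambda>_. a + a\<^sup>2 * (real (n - 1) + 2 * (\<Sum>d=1..n-1. G d))"] row n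
    by (simp add: of_nat_diff Suc_le_eq)
  have mu0: "0 < \<mu>" unfolding mu using n a0 by simp
  have "P.prob Z \<le> (real n * (a + a\<^sup>2 * (real (n - 1) + 2 * (\<Sum>d=1..n-1. G d))) - \<mu>\<^sup>2) / \<mu>\<^sup>2"
    using SM S2 mu0 by (simp add: le_divide_eq)
  also have "\<dots> = 1 / (real n * a) + (real (n - 1) / real n - 1) + 2 / real n * (\<Sum>d=1..n-1. G d)"
    unfolding mu using n a0 by (simp add: field_simps power2_eq_square)
  also have "\<dots> \<le> 1 / (real n * a) + 2 / real n * (\<Sum>d=1..n-1. G d)"
    using n by (simp add: divide_le_eq)
  finally have PZ: "P.prob Z \<le> 1 / (real n * a) + 2 / real n * (\<Sum>d=1..n-1. G d)" .
  have ZS: "Z \<in> P.events"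
  proof -
    have "{\<omega> \<in> space (cov_space R n). \<omega> \<notin> Unc n m x} \<in> P.events" for x
    proof -
      have "{\<omega> \<in> space (cov_space R n). \<omega> \<notin> Unc n m x} = space (cov_space R n) - Unc n m x" by auto
      then show ?thesis using Unc_sets by (metis sets.compl_sets)
    qed
    then show ?thesis unfolding Z_def by (intro sets.sets_Collect_finite_All) auto
  qed
  have "{\<omega>. covered n \<omega> m = {..<n}} \<subseteq> Z"
    unfolding Z_def Unc_def by auto
  then have "P.prob {\<omega>. covered n \<omega> m = {..<n}} \<le> P.prob Z"
    by (rule measure_le_superset[OF _ ZS, rotated]) unfold_locales
  also note PZ
  finally show ?thesis unfolding a_def p_def G_def by simp
qed



lemma covered_sub: "0 < n \<Longrightarrow> covered n \<omega> m \<subseteq> {..<n}"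
  by (auto simp: covered_def arc_def)

lemma covered_mono: "a \<le> b \<Longrightarrow> covered n \<omega> a \<subseteq> covered n \<omega> b"
  unfolding covered_def by (intro UN_mono) auto

lemma S_mono:
  fixes \<omega> :: "nat \<Rightarrow> (nat \<times> nat) \<times> real"
  assumes "\<forall>i. 0 \<le> snd (\<omega> i)" "a \<le> b"
  shows "(\<Sum>i<a. snd (\<omega> i)) \<le> (\<Sum>i<b. snd (\<omega> i))"
  by (rule sum_mono2) (use assms in auto)

lemma EXD_nonneg: "emeasure EXD {x. 0 \<le> x} = 1"
proof -
  have "emeasure EXD {x. 0 \<le> x} = (\<integral>\<^sup>+ x. ennreal (exponential_density 1 x) * indicator {x. 0 \<le> x} x \<partial>lborel)"
    by (subst emeasure_density) auto
  also have "\<dots> = (\<integral>\<^sup>+ x. ennreal (exponential_density 1 x) \<partial>lborel)"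
    by (rule nn_integral_cong) (auto simp: indicator_def exponential_density_def)
  also have "\<dots> = emeasure EXD UNIV"
    by (subst emeasure_density) auto
  also have "\<dots> = 1" using prob_space.emeasure_space_1[OF prob_EXD] by simp
  finally show ?thesis .
qed

lemma prob_neg_k:
  assumes n: "0 < n"
  shows "emeasure (cov_space R n) {\<omega>. \<forall>k<m. 0 \<le> snd (\<omega> k)} = 1"
proof -
  have S: "{\<omega> \<in> space (cov_space R n). \<forall>k\<in>{..<m}. 0 \<le> snd (\<omega> k)} \<in> sets (cov_space R n)"
    unfolding cov_space_def step_measure_def by measurable
  have E: "{\<omega> \<in> space (cov_space R n). \<forall>k\<in>{..<m}. 0 \<le> snd (\<omega> k)} = {\<omega>. \<forall>k<m. 0 \<le> snd (\<omega> k)}"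
    by auto
  have "emeasure (cov_space R n) {\<omega>. \<forall>k<m. 0 \<le> snd (\<omega> k)} = (\<integral>\<^sup>+ \<omega>. indicator {\<omega>. \<forall>k<m. 0 \<le> snd (\<omega> k)} \<omega> \<partial>cov_space R n)"
    using S unfolding E by simp
  also have "\<dots> = (\<integral>\<^sup>+ \<omega>. (\<Prod>k<m. indicator {x. 0 \<le> x} (snd (\<omega> k))) \<partial>cov_space R n)"
    by (rule nn_integral_cong) (auto simp: indicator_def)
  also have "\<dots> = (\<integral>\<^sup>+ s. indicator {x. 0 \<le> x} (snd s) \<partial>step_measure R n) ^ m"
    by (rule nn_prod[OF n]) (simp add: step_measure_def)
  also have "(\<integral>\<^sup>+ s. indicator {x::real. 0 \<le> x} (snd s) \<partial>step_measure R n) = 1"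
    using nn_snd[OF n, where h="indicator {x::real. 0 \<le> x}" and R=R] EXD_nonneg by simp
  finally show ?thesis by simp
qed

definition Neg :: "(nat \<Rightarrow> (nat \<times> nat) \<times> real) set" where
  "Neg = {\<omega>. \<exists>i. snd (\<omega> i) < 0}"

lemma Neg_null:
  assumes n: "0 < n"
  shows "Neg \<in> sets (cov_space R n)" "emeasure (cov_space R n) Neg = 0"
proof -
  interpret P: prob_space "cov_space R n" by (rule prob_cov[OF n])
  define N :: "nat \<Rightarrow> (nat \<Rightarrow> (nat \<times> nat) \<times> real) set" where "N i = {\<omega>. \<not> (\<forall>k<Suc i. 0 \<le> snd (\<omega> k))}" for i
  have NS: "N i \<in> sets (cov_space R n)" for i
  proof -
    have "{\<omega> \<in> space (cov_space R n). \<not> (\<forall>k\<in>{..<Suc i}. 0 \<le> snd (\<omega> k))} \<in> sets (cov_space R n)"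
      unfolding cov_space_def step_measure_def by measurable
    moreover have "{\<omega> \<in> space (cov_space R n). \<not> (\<forall>k\<in>{..<Suc i}. 0 \<le> snd (\<omega> k))} = N i"
      unfolding N_def by auto
    ultimately show ?thesis by simp
  qed
  have N0: "emeasure (cov_space R n) (N i) = 0" for i
  proof -
    have "N i = space (cov_space R n) - {\<omega>. \<forall>k<Suc i. 0 \<le> snd (\<omega> k)}" unfolding N_def by auto
    moreover have "{\<omega>. \<forall>k<Suc i. 0 \<le> snd (\<omega> k)} \<in> sets (cov_space R n)"
    proof -
      have "{\<omega> \<in> space (cov_space R n). \<forall>k\<in>{..<Suc i}. 0 \<le> snd (\<omega> k)} \<in> sets (cov_space R n)"
        unfolding cov_space_def step_measure_def by measurable
      moreover have "{\<omega> \<in> space (cov_space R n). \<forall>k\<in>{..<Suc i}. 0 \<le> snd (\<omega> k)} = {\<omega>. \<forall>k<Suc i. 0 \<le> snd (\<omega> k)}"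
        by auto
      ultimately show ?thesis by simp
    qed
    ultimately show ?thesis using emeasure_compl[of "{\<omega>. \<forall>k<Suc i. 0 \<le> snd (\<omega> k)}" "cov_space R n"] prob_neg_k[OF n, where m="Suc i" and R=R]
      using P.emeasure_space_1 by simp
  qed
  have NE: "Neg = (\<Union>i. N i)" unfolding Neg_def N_def by (auto simp: not_le)
  show "Neg \<in> sets (cov_space R n)" unfolding NE using NS by auto
  show "emeasure (cov_space R n) Neg = 0" unfolding NE
    by (rule emeasure_UN_eq_0) (auto simp: N0 NS)
qed



definition Ssum :: "(nat \<Rightarrow> (nat \<times> nat) \<times> real) \<Rightarrow> nat \<Rightarrow> real" where
  "Ssum \<omega> j = (\<Sum>i<j. snd (\<omega> i))"

definition Cset :: "nat \<Rightarrow> (nat \<Rightarrow> (nat \<times> nat) \<times> real) \<Rightarrow> real set" where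
  "Cset n \<omega> = {t. 0 \<le> t \<and> covered n \<omega> (poisson_count \<omega> t) = {..<n}}"

lemma Ssum_mono: "\<omega> \<notin> Neg \<Longrightarrow> a \<le> b \<Longrightarrow> Ssum \<omega> a \<le> Ssum \<omega> b"
  unfolding Ssum_def by (rule S_mono) (auto simp: Neg_def not_less)

lemma D1:
  assumes n: "0 < n" and om: "\<omega> \<notin> Neg" and ne: "Cset n \<omega> \<noteq> {}" and lt: "cover_time n \<omega> < t"
  shows "Ssum \<omega> (Suc m) \<le> t \<or> covered n \<omega> m = {..<n}"
proof (cases "Ssum \<omega> (Suc m) \<le> t")
  case False
  note nt = False
  have "Inf (Cset n \<omega>) < t" using lt by (simp add: cover_time_def Cset_def)
  then obtain s where s: "s \<in> Cset n \<omega>" "s < t" using cInf_lessD[OF ne] by blast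
  have J: "{j. 1 \<le> j \<and> (\<Sum>i<j. snd (\<omega> i)) \<le> s} \<subseteq> {1..m}"
  proof
    fix j assume j: "j \<in> {j. 1 \<le> j \<and> (\<Sum>i<j. snd (\<omega> i)) \<le> s}"
    show "j \<in> {1..m}"
    proof (rule ccontr)
      assume "j \<notin> {1..m}"
      then have "Suc m \<le> j" using j by auto
      then have "Ssum \<omega> (Suc m) \<le> Ssum \<omega> j" by (rule Ssum_mono[OF om])
      then show False using j nt s(2) by (auto simp: Ssum_def)
    qed
  qed
  have "poisson_count \<omega> s \<le> m"
    unfolding poisson_count_def using card_mono[OF _ J] by simp
  then have "covered n \<omega> (poisson_count \<omega> s) \<subseteq> covered n \<omega> m" by (rule covered_mono)
  moreover have "covered n \<omega> (poisson_count \<omega> s) = {..<n}" using s(1) by (simp add: Cset_def)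
  ultimately have "covered n \<omega> m = {..<n}" using covered_sub[OF n, of \<omega> m] by auto
  then show ?thesis by simp
qed simp

lemma D2:
  assumes n: "0 < n" and om: "\<omega> \<notin> Neg" and e: "Cset n \<omega> = {}" and T: "0 \<le> T"
  shows "Ssum \<omega> M' \<le> T \<or> T < Ssum \<omega> M \<or> covered n \<omega> M \<noteq> {..<n}"
proof (rule ccontr)
  assume "\<not> ?thesis"
  then have h1: "T < Ssum \<omega> M'" and h2: "Ssum \<omega> M \<le> T" and h3: "covered n \<omega> M = {..<n}" by auto
  define J where "J = {j. 1 \<le> j \<and> (\<Sum>i<j. snd (\<omega> i)) \<le> T}"
  have J1: "J \<subseteq> {..<M'}"
  proof
    fix j assume j: "j \<in> J"
    show "j \<in> {..<M'}"
    proof (rule ccontr)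
      assume "j \<notin> {..<M'}"
      then have "Ssum \<omega> M' \<le> Ssum \<omega> j" by (intro Ssum_mono[OF om]) auto
      then show False using j h1 by (auto simp: J_def Ssum_def)
    qed
  qed
  have J2: "{1..M} \<subseteq> J"
  proof
    fix j assume j: "j \<in> {1..M}"
    then have "Ssum \<omega> j \<le> Ssum \<omega> M" by (intro Ssum_mono[OF om]) auto
    then show "j \<in> J" using j h2 by (auto simp: J_def Ssum_def)
  qed
  have fJ: "finite J" using J1 finite_subset by blast
  have "M \<le> card J" using card_mono[OF fJ J2] by simp
  then have "covered n \<omega> M \<subseteq> covered n \<omega> (card J)" by (rule covered_mono)
  then have "covered n \<omega> (poisson_count \<omega> T) = {..<n}"
    using h3 covered_sub[OF n, of \<omega> "card J"] by (auto simp: poisson_count_def J_def)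
  then have "T \<in> Cset n \<omega>" using T by (simp add: Cset_def)
  then show False using e by simp
qed

lemma pp_ge:
  assumes n: "0 < n" and pos: "\<forall>k\<in>set_pmf R. 1 \<le> k"
  shows "1 / real n \<le> pp R n"
proof -
  have t1: "tailf R 1 = 1"
  proof -
    have "tailf R 1 = measure_pmf.prob R {k. 1 \<le> k}" by (simp add: tailf_def)
    also have "{k::nat. 1 \<le> k} = - {0}" by auto
    also have "measure_pmf.prob R (- {0}) = 1 - pmf R 0" by (simp add: pmf_compl measure_pmf_single)
    also have "pmf R 0 = 0" using pos by (auto simp: set_pmf_iff)
    finally show ?thesis by simp
  qed
  have "tailf R (real 1) \<le> (\<Sum>i=1..n. tailf R (real i))"
    using n by (intro member_le_sum) (auto simp: tailf_def)
  then show ?thesis using t1 n by (simp add: divide_right_mono)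
qed

lemma Unc_not_cov: "0 < n \<Longrightarrow> {\<omega>. covered n \<omega> M \<noteq> {..<n}} = (\<Union>x\<in>{..<n}. Unc n M x)"
  using covered_sub by (auto simp: Unc_def)

lemma cov_all_sets: "0 < n \<Longrightarrow> {\<omega>. covered n \<omega> m = {..<n}} \<in> sets (cov_space R n)"
proof -
  assume n: "0 < n"
  have "{\<omega>. covered n \<omega> m = {..<n}} = space (cov_space R n) - (\<Union>x\<in>{..<n}. Unc n m x)"
    using Unc_not_cov[OF n, of m] by auto
  moreover have "(\<Union>x\<in>{..<n}. Unc n m x) \<in> sets (cov_space R n)"
    by (intro sets.finite_UN) (auto simp: Unc_sets)
  ultimately show ?thesis by (metis sets.compl_sets)
qed



lemma Ssum_le_sets: "{\<omega>. Ssum \<omega> j \<le> t} \<in> sets (cov_space R n)"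
proof -
  have "{\<omega> \<in> space (cov_space R n). (\<Sum>i<j. snd (\<omega> i)) \<le> t} \<in> sets (cov_space R n)" by measurable
  then show ?thesis by (simp add: Ssum_def)
qed

lemma Ssum_gt_sets: "{\<omega>. t < Ssum \<omega> j} \<in> sets (cov_space R n)"
proof -
  have "{\<omega> \<in> space (cov_space R n). t < (\<Sum>i<j. snd (\<omega> i))} \<in> sets (cov_space R n)" by measurable
  then show ?thesis by (simp add: Ssum_def)
qed

lemma time_bound:
  assumes n: "0 < n" and pos: "\<forall>k\<in>set_pmf R. 1 \<le> k" and t: "0 \<le> t"
  shows "measure (cov_space R n) {\<omega>. cover_time n \<omega> < t}
           \<le> exp t / 2 ^ Suc m + measure (cov_space R n) {\<omega>. covered n \<omega> m = {..<n}}"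
proof (rule field_le_epsilon)
  fix e :: real assume e: "0 < e"
  interpret P: prob_space "cov_space R n" by (rule prob_cov[OF n])
  have "(\<lambda>M. real n * (1 - 1 / real n) ^ M) \<longlonglongrightarrow> real n * 0"
    using n by (intro tendsto_mult tendsto_const LIMSEQ_power_zero) (auto simp: field_simps)
  then obtain M where M: "real n * (1 - 1 / real n) ^ M < e / 3"
    using e by (metis (no_types, lifting) eventually_sequentially mult_zero_right order_tendstoD(2) order_refl zero_less_divide_iff zero_less_numeral)
  define T where "T = max 0 (2 * ln (2 ^ M / (e / 3)))"
  have T0: "0 \<le> T" by (simp add: T_def)
  obtain M' where M': "exp T / (e / 3) < 2 ^ M'" using real_arch_pow[of 2 "exp T / (e / 3)"] by auto
  define B1 where "B1 = {\<omega>. Ssum \<omega> M' \<le> T}"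
  define B2 where "B2 = {\<omega>. T < Ssum \<omega> M}"
  define B3 where "B3 = (\<Union>x\<in>{..<n}. Unc n M x)"
  define B4 where "B4 = {\<omega>. Ssum \<omega> (Suc m) \<le> t}"
  define B5 where "B5 = {\<omega>. covered n \<omega> m = {..<n}}"
  have S1: "B1 \<in> P.events" unfolding B1_def by (rule Ssum_le_sets)
  have S2: "B2 \<in> P.events" unfolding B2_def by (rule Ssum_gt_sets)
  have S3: "B3 \<in> P.events" unfolding B3_def by (intro sets.finite_UN) (auto simp: Unc_sets)
  have S4: "B4 \<in> P.events" unfolding B4_def by (rule Ssum_le_sets)
  have S5: "B5 \<in> P.events" unfolding B5_def by (rule cov_all_sets[OF n])
  have SN: "Neg \<in> P.events" by (rule Neg_null(1)[OF n])
  have sub: "{\<omega>. cover_time n \<omega> < t} \<subseteq> Neg \<union> B1 \<union> B2 \<union> B3 \<union> B4 \<union> B5"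
  proof
    fix \<omega> assume w: "\<omega> \<in> {\<omega>. cover_time n \<omega> < t}"
    show "\<omega> \<in> Neg \<union> B1 \<union> B2 \<union> B3 \<union> B4 \<union> B5"
    proof (cases "\<omega> \<in> Neg")
      case False
      show ?thesis
      proof (cases "Cset n \<omega> = {}")
        case True
        from D2[OF n False True T0, of M' M] have "\<omega> \<in> B1 \<or> \<omega> \<in> B2 \<or> \<omega> \<in> B3"
          unfolding B1_def B2_def B3_def using Unc_not_cov[OF n, of M] by blast
        then show ?thesis by blast
      next
        case ne: False
        from D1[OF n False ne, of t m] w have "\<omega> \<in> B4 \<or> \<omega> \<in> B5"
          unfolding B4_def B5_def by auto
        then show ?thesis by blast
      qed
    qed simp
  qed
  have "P.prob {\<omega>. cover_time n \<omega> < t} \<le> P.prob (Neg \<union> B1 \<union> B2 \<union> B3 \<union> B4 \<union> B5)"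
    by (rule measure_le_superset[OF _ _ sub]) (unfold_locales, use SN S1 S2 S3 S4 S5 in auto)
  also have "\<dots> \<le> P.prob Neg + P.prob B1 + P.prob B2 + P.prob B3 + P.prob B4 + P.prob B5"
  proof -
    have "P.prob (Neg \<union> B1 \<union> B2 \<union> B3 \<union> B4 \<union> B5) \<le> P.prob (Neg \<union> B1 \<union> B2 \<union> B3 \<union> B4) + P.prob B5"
      by (rule measure_Un_le) (use SN S1 S2 S3 S4 S5 in auto)
    moreover have "P.prob (Neg \<union> B1 \<union> B2 \<union> B3 \<union> B4) \<le> P.prob (Neg \<union> B1 \<union> B2 \<union> B3) + P.prob B4"
      by (rule measure_Un_le) (use SN S1 S2 S3 S4 in auto)
    moreover have "P.prob (Neg \<union> B1 \<union> B2 \<union> B3) \<le> P.prob (Neg \<union> B1 \<union> B2) + P.prob B3"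
      by (rule measure_Un_le) (use SN S1 S2 S3 in auto)
    moreover have "P.prob (Neg \<union> B1 \<union> B2) \<le> P.prob (Neg \<union> B1) + P.prob B2"
      by (rule measure_Un_le) (use SN S1 S2 in auto)
    moreover have "P.prob (Neg \<union> B1) \<le> P.prob Neg + P.prob B1"
      by (rule measure_Un_le) (use SN S1 in auto)
    ultimately show ?thesis by linarith
  qed
  also have "P.prob Neg = 0" using Neg_null(2)[OF n, of R] by (simp add: measure_def)
  also have "P.prob B1 \<le> e / 3"
  proof -
    have "P.prob B1 \<le> exp T / 2 ^ M'" unfolding B1_def Ssum_def by (rule chern_lo[OF n])
    also have "\<dots> \<le> e / 3"
    proof -
      have "exp T < (e / 3) * 2 ^ M'" using M' e by (simp add: divide_less_eq mult.commute)
      then show ?thesis by (simp add: divide_le_eq)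
    qed
    finally show ?thesis .
  qed
  also have "P.prob B2 \<le> e / 3"
  proof -
    have "P.prob B2 \<le> exp (- T / 2) * 2 ^ M" unfolding B2_def Ssum_def by (rule chern_hi[OF n])
    also have "\<dots> \<le> exp (- ln (2 ^ M / (e / 3))) * 2 ^ M"
      by (intro mult_right_mono) (auto simp: T_def)
    also have "\<dots> = e / 3"
    proof -
      have "exp (- ln (2 ^ M / (e / 3))) = inverse (2 ^ M / (e / 3))"
        using e by (simp add: exp_minus)
      then show ?thesis by simp
    qed
    finally show ?thesis .
  qed
  also have "P.prob B3 \<le> e / 3"
  proof -
    have "P.prob B3 \<le> (\<Sum>x\<in>{..<n}. P.prob (Unc n M x))"
      unfolding B3_def by (rule measure_UNION_le) (auto simp: Unc_sets)
    also have "\<dots> = real n * (1 - pp R n) ^ M" by (simp add: prob_Unc[OF n])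
    also have "\<dots> \<le> real n * (1 - 1 / real n) ^ M"
      using pp_ge[OF n pos] pp_le1[OF n, of R]
      by (intro mult_left_mono power_mono) auto
    finally show ?thesis using M by simp
  qed
  also have "P.prob B4 \<le> exp t / 2 ^ Suc m" unfolding B4_def Ssum_def by (rule chern_lo[OF n])
  finally show "P.prob {\<omega>. cover_time n \<omega> < t} \<le> exp t / 2 ^ Suc m + P.prob {\<omega>. covered n \<omega> m = {..<n}} + e"
    unfolding B5_def by simp
qed



lemma tailf_nonneg: "0 \<le> tailf R x" by (simp add: tailf_def)
lemma tailf_le1: "tailf R x \<le> 1" by (simp add: tailf_def)
lemma tailf_mono: "x \<le> y \<Longrightarrow> tailf R y \<le> tailf R x"
  unfolding tailf_def by (rule measure_pmf.finite_measure_mono) auto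

lemma tailf_lim: "(\<lambda>n. tailf R (real n)) \<longlonglongrightarrow> 0"
proof -
  have "(\<lambda>n. measure_pmf.prob R {k. n \<le> k}) \<longlonglongrightarrow> measure_pmf.prob R (\<Inter>n. {k. n \<le> k})"
    by (rule measure_pmf.finite_Lim_measure_decseq) (auto simp: decseq_def)
  moreover have "(\<Inter>n. {k::nat. n \<le> k}) = {}" using Suc_n_not_le_n by blast
  ultimately show ?thesis by (simp add: tailf_def)
qed

lemma harm_bound:
  assumes "1 \<le> a" "a \<le> b"
  shows "(\<Sum>i\<in>{a<..b}. 1 / real i) \<le> ln (real b) - ln (real a)"
  using assms(2)
proof (induct b rule: dec_induct)
  case base then show ?case by simp
next
  case (step k)
  have k1: "1 \<le> k" using step assms by simp
  have "{a<..Suc k} = insert (Suc k) {a<..k}" using step by auto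
  then have "(\<Sum>i\<in>{a<..Suc k}. 1 / real i) = 1 / real (Suc k) + (\<Sum>i\<in>{a<..k}. 1 / real i)" by simp
  also have "1 / real (Suc k) \<le> ln (real (Suc k)) - ln (real k)"
  proof -
    have "ln (real k / real (Suc k)) \<le> real k / real (Suc k) - 1"
      using k1 by (intro ln_le_minus_one) auto
    also have "\<dots> = - (1 / real (Suc k))" by (simp add: field_simps)
    finally show ?thesis using k1 by (simp add: ln_div)
  qed
  finally show ?case using step by simp
qed

lemma pow_sum:
  fixes g :: real
  assumes g: "0 \<le> g" "g < 1"
  shows "(\<Sum>d=1..N. real d powr (- g)) \<le> real N powr (1 - g) / (1 - g)"
proof (induct N)
  case 0 then show ?case by simp
next
  case (Suc N)
  show ?case
  proof (cases "N = 0")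
    case True
    then show ?thesis using g by (simp add: field_simps)
  next
    case False
    then have N1: "1 \<le> real N" by simp
    have "\<exists>z>real N. z < real (Suc N) \<and> real (Suc N) powr (1 - g) - real N powr (1 - g) = (real (Suc N) - real N) * ((1 - g) * z powr (1 - g - 1))"
    proof (rule MVT2)
      show "real N < real (Suc N)" by simp
      fix x assume "real N \<le> x" "x \<le> real (Suc N)"
      then have "0 < x" using N1 by simp
      then show "((\<lambda>x. x powr (1 - g)) has_real_derivative (1 - g) * x powr (1 - g - 1)) (at x)"
        by (auto intro!: derivative_eq_intros)
    qed
    then obtain z where z: "real N < z" "z < real (Suc N)"
      "real (Suc N) powr (1 - g) - real N powr (1 - g) = (1 - g) * z powr (- g)" by auto
    have "real (Suc N) powr (- g) \<le> z powr (- g)"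
      using z N1 g by (intro powr_mono2') auto
    then have "(1 - g) * real (Suc N) powr (- g) \<le> (1 - g) * z powr (- g)"
      using g by (intro mult_left_mono) auto
    then have "(1 - g) * real (Suc N) powr (- g) \<le> real (Suc N) powr (1 - g) - real N powr (1 - g)"
      using z(3) by simp
    then have "real (Suc N) powr (- g) \<le> (real (Suc N) powr (1 - g) - real N powr (1 - g)) / (1 - g)"
      using g by (simp add: field_simps)
    then show ?thesis using Suc by (simp add: diff_divide_distrib)
  qed
qed



lemma A1:
  fixes n :: nat and C C' :: real
  assumes n: "2 \<le> n" and C: "0 \<le> C"
    and hC: "\<forall>x. real n powr (1/2) \<le> x \<and> x \<le> real n \<longrightarrow> x * tailf R x \<le> C * (real n * tailf R (real n))"
    and hC': "(\<Sum>i=1..nat \<lfloor>real n powr (1/2)\<rfloor>. tailf R (real i)) \<le> C' * (tailf R (real n) * real n * ln (real n))"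
  shows "(\<Sum>i=1..n. tailf R (real i)) \<le> (C + C') * (real n * tailf R (real n) * ln (real n))"
proof -
  define s where "s = nat \<lfloor>real n powr (1/2)\<rfloor>"
  define L where "L = real n * tailf R (real n)"
  have L0: "0 \<le> L" unfolding L_def by (simp add: tailf_nonneg)
  have sq1: "1 \<le> real n powr (1/2)" using n by (simp add: ge_one_powr_ge_zero)
  have sqn: "real n powr (1/2) \<le> real n" using powr_mono[of "1/2" 1 "real n"] n by simp
  have sy: "real s \<le> real n powr (1/2)" unfolding s_def using sq1 by simp
  have ys: "real n powr (1/2) < real s + 1" unfolding s_def using sq1 by linarith
  have s1: "1 \<le> s" using ys sq1 by linarith
  have sn: "s \<le> n" using sy sqn by linarith
  have ss: "real n powr (1/2) < real (Suc s)" using ys by simp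
  have split: "{1..n} = {1..s} \<union> {s<..n}" using s1 sn by auto
  have "(\<Sum>i=1..n. tailf R (real i)) = (\<Sum>i=1..s. tailf R (real i)) + (\<Sum>i\<in>{s<..n}. tailf R (real i))"
    unfolding split by (rule sum.union_disjoint) auto
  also have "(\<Sum>i\<in>{s<..n}. tailf R (real i)) \<le> (\<Sum>i\<in>{s<..n}. C * L * (1 / real i))"
  proof (rule sum_mono)
    fix i assume i: "i \<in> {s<..n}"
    then have "real n powr (1/2) \<le> real i" "real i \<le> real n" using ss by auto
    then have "real i * tailf R (real i) \<le> C * L" using hC unfolding L_def by auto
    moreover have "0 < real i" using i s1 by auto
    ultimately show "tailf R (real i) \<le> C * L * (1 / real i)" by (simp add: field_simps)
  qed
  also have "\<dots> = C * L * (\<Sum>i\<in>{s<..n}. 1 / real i)" by (simp add: sum_distrib_left)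
  also have "\<dots> \<le> C * L * (ln (real n) - ln (real s))"
    using harm_bound[OF s1 sn] C L0 by (intro mult_left_mono) auto
  also have "\<dots> \<le> C * L * ln (real n)"
    using s1 C L0 by (intro mult_left_mono) auto
  finally show ?thesis using hC' unfolding s_def L_def by (simp add: algebra_simps)
qed

lemma A2:
  fixes n d :: nat and C :: real
  assumes C: "0 \<le> C" and d1: "1 \<le> d" and dn: "d + 1 \<le> n" and dsq: "real n powr (1/2) \<le> real d"
    and hC: "\<forall>x. real n powr (1/2) \<le> x \<and> x \<le> real n \<longrightarrow> x * tailf R x \<le> C * (real n * tailf R (real n))"
  shows "Qf R n d \<le> C * tailf R (real n) * (1 + ln (real n) - ln (real d))"
proof -
  define L where "L = real n * tailf R (real n)"
  have L0: "0 \<le> L" unfolding L_def by (simp add: tailf_nonneg)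
  have n0: "0 < n" using dn by simp
  have "(\<Sum>i=1..n. tailf R (real (max i (d + 1)))) \<le> (\<Sum>i=1..n. C * L * (1 / real (max i (d + 1))))"
  proof (rule sum_mono)
    fix i assume i: "i \<in> {1..n}"
    let ?j = "max i (d + 1)"
    have "real n powr (1/2) \<le> real ?j" "real ?j \<le> real n" using dsq i dn by auto
    then have "real ?j * tailf R (real ?j) \<le> C * L" using hC unfolding L_def by blast
    moreover have "0 < real ?j" by simp
    ultimately show "tailf R (real ?j) \<le> C * L * (1 / real ?j)" by (simp add: field_simps)
  qed
  also have "\<dots> = C * L * (\<Sum>i=1..n. 1 / real (max i (d + 1)))" by (simp add: sum_distrib_left)
  also have "(\<Sum>i=1..n. 1 / real (max i (d + 1))) \<le> 1 + (ln (real n) - ln (real d))"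
  proof -
    have split: "{1..n} = {1..d} \<union> {d<..n}" using d1 dn by auto
    have "(\<Sum>i=1..n. 1 / real (max i (d + 1))) = (\<Sum>i=1..d. 1 / real (max i (d + 1))) + (\<Sum>i\<in>{d<..n}. 1 / real (max i (d + 1)))"
      unfolding split by (rule sum.union_disjoint) auto
    also have "(\<Sum>i=1..d. 1 / real (max i (d + 1))) = real d / real (d + 1)"
      by (simp add: max_def)
    also have "\<dots> \<le> 1" by simp
    also have "(\<Sum>i\<in>{d<..n}. 1 / real (max i (d + 1))) = (\<Sum>i\<in>{d<..n}. 1 / real i)"
      by (rule sum.cong) (auto simp: max_def)
    also have "\<dots> \<le> ln (real n) - ln (real d)" by (rule harm_bound) (use d1 dn in auto)
    finally show ?thesis by simp
  qed
  then have "C * L * (\<Sum>i=1..n. 1 / real (max i (d + 1))) \<le> C * L * (1 + (ln (real n) - ln (real d)))"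
    using C L0 by (intro mult_left_mono) auto
  finally have "(\<Sum>i=1..n. tailf R (real (max i (d + 1)))) \<le> C * L * (1 + (ln (real n) - ln (real d)))" .
  then have "(\<Sum>i=1..n. tailf R (real (max i (d + 1)))) / real n \<le> C * L * (1 + (ln (real n) - ln (real d))) / real n"
    by (rule divide_right_mono) simp
  also have "C * L * (1 + (ln (real n) - ln (real d))) / real n = C * tailf R (real n) * (1 + ln (real n) - ln (real d))"
    unfolding L_def using n0 by simp
  finally show ?thesis unfolding Qf_def .
qed

lemma A3: "Qf R n d \<le> pp R n"
  unfolding Qf_def by (intro divide_right_mono sum_mono tailf_mono) auto

lemma exp_lower:
  fixes p :: real assumes "0 \<le> p" "p \<le> 1/2"
  shows "exp (- 2 * p) \<le> 1 - p"
proof -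
  have "- p - 2 * p\<^sup>2 \<le> ln (1 - p)" by (rule ln_one_minus_pos_lower_bound) (use assms in auto)
  moreover have "- 2 * p \<le> - p - 2 * p\<^sup>2"
  proof -
    have "p * (2 * p) \<le> p * 1" by (rule mult_left_mono) (use assms in auto)
    then show ?thesis by (simp add: power2_eq_square)
  qed
  ultimately have "- 2 * p \<le> ln (1 - p)" by linarith
  then have "exp (- 2 * p) \<le> exp (ln (1 - p))" by simp
  also have "\<dots> = 1 - p" using assms by simp
  finally show ?thesis .
qed



lemma card_small:
  fixes y :: real assumes y: "0 \<le> y"
  shows "real (card {d\<in>{1..N}. real d < y}) \<le> y"
proof -
  have "{d\<in>{1..N}. real d < y} \<subseteq> {1..nat \<lfloor>y\<rfloor>}"
  proof
    fix d assume d: "d \<in> {d\<in>{1..N}. real d < y}"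
    then have "real d \<le> y" by simp
    then have "d \<le> nat \<lfloor>y\<rfloor>" using y by (simp add: le_nat_floor)
    then show "d \<in> {1..nat \<lfloor>y\<rfloor>}" using d by simp
  qed
  then have "card {d\<in>{1..N}. real d < y} \<le> nat \<lfloor>y\<rfloor>"
    using card_mono[of "{1..nat \<lfloor>y\<rfloor>}"] by fastforce
  then have "real (card {d\<in>{1..N}. real d < y}) \<le> real (nat \<lfloor>y\<rfloor>)" by simp
  also have "\<dots> \<le> y" using y by simp
  finally show ?thesis .
qed

lemma H2_sum:
  fixes g :: real and n :: nat
  assumes g: "0 \<le> g" "g < 1" and n: "1 \<le> n"
  shows "(\<Sum>d=1..n-1. exp g * real n powr g * real d powr (- g) - 1) \<le> real n * (exp g / (1 - g) - 1) + 1"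
proof -
  have "(\<Sum>d=1..n-1. exp g * real n powr g * real d powr (- g) - 1)
      = exp g * real n powr g * (\<Sum>d=1..n-1. real d powr (- g)) - real (n - 1)"
    by (simp add: sum_subtractf sum_distrib_left)
  also have "\<dots> \<le> exp g * real n powr g * (real (n - 1) powr (1 - g) / (1 - g)) - real (n - 1)"
    using pow_sum[OF g, of "n - 1"] by (intro diff_right_mono mult_left_mono) auto
  also have "\<dots> \<le> exp g * real n powr g * (real n powr (1 - g) / (1 - g)) - real (n - 1)"
    using g by (intro diff_right_mono mult_left_mono divide_right_mono powr_mono2) auto
  also have "exp g * real n powr g * (real n powr (1 - g) / (1 - g)) - real (n - 1) = real n * (exp g / (1 - g) - 1) + 1"
  proof -
    have "real n powr g * real n powr (1 - g) = real n"
      using n by (simp add: powr_add[symmetric])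
    then have "exp g * real n powr g * (real n powr (1 - g) / (1 - g)) = exp g * real n / (1 - g)"
      by (metis (no_types, lifting) mult.assoc times_divide_eq_right)
    then show ?thesis using n g by (simp add: of_nat_diff field_simps)
  qed
  finally show ?thesis .
qed

lemma B:
  fixes n :: nat and \<alpha> C K :: real
  assumes n: "2 \<le> n" and pos: "\<forall>k\<in>set_pmf R. 1 \<le> k"
    and a: "0 < \<alpha>" and fpos: "0 < tailf R (real n)" and fa: "tailf R (real n) \<le> \<alpha>"
    and p4: "pp R n \<le> 1/4"
    and C: "0 < C" and K: "0 < K" and aK: "12 * K * \<alpha> < 1" and aC: "12 * C * \<alpha> < 1"
    and hA1: "pp R n \<le> K * tailf R (real n) * ln (real n)"
    and hA2: "\<forall>d. real n powr (1/2) \<le> real d \<and> 1 \<le> d \<and> d + 1 \<le> n \<longrightarrow>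
                 Qf R n d \<le> C * tailf R (real n) * (1 + ln (real n) - ln (real d))"
  shows "measure (cov_space R n) {\<omega>. cover_time n \<omega> < \<alpha> / tailf R (real n)}
     \<le> exp (- (ln 4 - 1) * (\<alpha> / tailf R (real n))) + real n powr (6 * K * \<alpha> - 1)
        + 2 * real n powr (6 * K * \<alpha> - 1/2) + 2 / real n + 2 * (exp (6 * C * \<alpha>) / (1 - 6 * C * \<alpha>) - 1)"
proof -
  define f where "f = tailf R (real n)"
  define t where "t = \<alpha> / f"
  define m where "m = nat \<lceil>2 * t\<rceil>"
  define p where "p = pp R n"
  define g where "g = 6 * C * \<alpha>"
  have n0: "0 < n" using n by simp
  have t0: "0 < t" unfolding t_def f_def using a fpos by simp
  have m1: "2 * t \<le> real m" unfolding m_def using t0 by linarith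
  have m2: "real m \<le> 2 * t + 1" unfolding m_def using t0 by linarith
  have p0: "0 \<le> p" unfolding p_def by (simp add: sum_nonneg tailf_nonneg)
  have lnn: "0 \<le> ln (real n)" using n by simp
  have g0: "0 \<le> g" "g < 1" unfolding g_def using C a aC by auto
  have TB: "measure (cov_space R n) {\<omega>. cover_time n \<omega> < t} \<le> exp t / 2 ^ Suc m + measure (cov_space R n) {\<omega>. covered n \<omega> m = {..<n}}"
    by (rule time_bound[OF n0 pos]) (use t0 in simp)
  have pb: "(1 - pp R n)\<^sup>2 \<ge> 1/2"
  proof -
    have "3/4 \<le> 1 - pp R n" using p4 by simp
    then have "(3/4)\<^sup>2 \<le> (1 - pp R n)\<^sup>2" by (intro power_mono) auto
    moreover have "(3/4::real)\<^sup>2 = 9/16" by (simp add: power2_eq_square)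
    ultimately show ?thesis by linarith
  qed
  have CB: "measure (cov_space R n) {\<omega>. covered n \<omega> m = {..<n}}
     \<le> 1 / (real n * (1 - p) ^ m) + 2 / real n * (\<Sum>d=1..n-1. exp (2 * real m * Qf R n d) - 1)"
    unfolding p_def by (rule cover_bound[OF n0 pb])
  have E1: "exp t / 2 ^ Suc m \<le> exp (- (ln 4 - 1) * t)"
  proof -
    have "exp (real (Suc m) * ln 2) = (2::real) ^ Suc m"
      by (subst exp_of_nat_mult) simp
    then have "(2::real) ^ Suc m = exp (real (Suc m) * ln 2)" by simp
    also have "exp (real (Suc m) * ln 2) \<ge> exp (2 * t * ln 2)"
      using m1 by simp
    finally have "exp (2 * t * ln 2) \<le> 2 ^ Suc m" .
    then have "exp t / 2 ^ Suc m \<le> exp t / exp (2 * t * ln 2)"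
      by (intro divide_left_mono) auto
    also have "\<dots> = exp (- (ln 4 - 1) * t)"
    proof -
      have "ln (4::real) = 2 * ln 2"
        using ln_realpow[of 2 2] by simp
      then show ?thesis by (simp add: exp_diff[symmetric] algebra_simps)
    qed
    finally show ?thesis .
  qed
  have mp: "real m * p \<le> 3 * K * \<alpha> * ln (real n)"
  proof -
    have "real m * p \<le> (2 * t + 1) * p" using m2 p0 by (intro mult_right_mono) auto
    also have "\<dots> \<le> (2 * t + 1) * (K * f * ln (real n))"
      using hA1 t0 unfolding p_def f_def by (intro mult_left_mono) auto
    also have "\<dots> = K * (2 * \<alpha> + f) * ln (real n)"
      unfolding t_def using fpos unfolding f_def by (simp add: field_simps)
    also have "\<dots> \<le> K * (3 * \<alpha>) * ln (real n)"
      using fa K lnn unfolding f_def by (intro mult_right_mono mult_left_mono) auto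
    finally show ?thesis by simp
  qed
  have E2: "1 / (real n * (1 - p) ^ m) \<le> real n powr (6 * K * \<alpha> - 1)"
  proof -
    have "p \<le> 1/2" using p4 p_def by linarith
    then have "exp (- 2 * p) \<le> 1 - p" by (rule exp_lower[OF p0])
    then have "exp (- 2 * p) ^ m \<le> (1 - p) ^ m"
      by (intro power_mono) auto
    moreover have "exp (- 2 * p) ^ m = exp (- 2 * (real m * p))"
      by (simp add: exp_of_nat_mult[symmetric] mult_ac)
    moreover have "exp (- 6 * K * \<alpha> * ln (real n)) \<le> exp (- 2 * (real m * p))"
      by (subst exp_le_cancel_iff) (use mp in linarith)
    moreover have "exp (- 6 * K * \<alpha> * ln (real n)) = real n powr (- 6 * K * \<alpha>)"
      using n0 by (simp add: powr_def)
    ultimately have low: "real n powr (- 6 * K * \<alpha>) \<le> (1 - p) ^ m" by linarith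
    have pos1: "0 < real n powr (- 6 * K * \<alpha>)" using n0 by simp
    have "1 / (real n * (1 - p) ^ m) \<le> 1 / (real n * real n powr (- 6 * K * \<alpha>))"
      using low pos1 n0 by (intro divide_left_mono mult_left_mono mult_pos_pos) (auto intro: less_le_trans[OF pos1 low])
    also have "\<dots> = real n powr (6 * K * \<alpha> - 1)"
      using n0 by (simp add: powr_diff powr_minus field_simps)
    finally show ?thesis .
  qed
  define y where "y = real n powr (1/2)"
  have y0: "0 \<le> y" unfolding y_def by simp
  define H1 where "H1 d = (if real d < y then real n powr (6 * K * \<alpha>) else 0)" for d :: nat
  define H2 where "H2 d = exp g * real n powr g * real d powr (- g) - 1" for d :: nat
  have GH: "exp (2 * real m * Qf R n d) - 1 \<le> H1 d + H2 d" if d: "d \<in> {1..n-1}" for d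
  proof -
    have d1: "1 \<le> d" "d + 1 \<le> n" using d n by auto
    have H2nn: "0 \<le> H2 d"
    proof -
      have "1 \<le> exp g" using g0 by simp
      moreover have "1 \<le> real n powr g * real d powr (- g)"
      proof -
        have "real d powr g \<le> real n powr g" using d1 g0 by (intro powr_mono2) auto
        then show ?thesis using d1 by (simp add: powr_minus divide_simps)
      qed
      ultimately have "1 * 1 \<le> exp g * (real n powr g * real d powr (- g))"
        by (intro mult_mono) auto
      then show ?thesis unfolding H2_def by (simp add: mult.assoc)
    qed
    show ?thesis
    proof (cases "real d < y")
      case True
      have "2 * real m * Qf R n d \<le> 2 * real m * p"
        using A3[of R n d] unfolding p_def by (intro mult_left_mono) auto
      also have "\<dots> \<le> 6 * K * \<alpha> * ln (real n)" using mp by linarith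
      finally have "exp (2 * real m * Qf R n d) \<le> exp (6 * K * \<alpha> * ln (real n))" by simp
      also have "\<dots> = real n powr (6 * K * \<alpha>)" using n0 by (simp add: powr_def)
      finally show ?thesis using True H2nn unfolding H1_def by simp
    next
      case False
      then have dy: "real n powr (1/2) \<le> real d" unfolding y_def by simp
      have Qb: "Qf R n d \<le> C * f * (1 + ln (real n) - ln (real d))"
        using hA2 dy d1 unfolding f_def by blast
      have "ln (real d) \<le> ln (real n)" using d1 by simp
      then have l0: "0 \<le> 1 + ln (real n) - ln (real d)" by linarith
      have "2 * real m * Qf R n d \<le> 2 * real m * (C * f * (1 + ln (real n) - ln (real d)))"
        using Qb by (intro mult_left_mono) auto
      also have "\<dots> \<le> 2 * (2 * t + 1) * (C * f * (1 + ln (real n) - ln (real d)))"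
        using m2 C fpos l0 unfolding f_def by (intro mult_right_mono mult_left_mono) auto
      also have "\<dots> = 2 * C * (2 * \<alpha> + f) * (1 + ln (real n) - ln (real d))"
        unfolding t_def using fpos unfolding f_def by (simp add: field_simps)
      also have "\<dots> \<le> 2 * C * (3 * \<alpha>) * (1 + ln (real n) - ln (real d))"
        using fa C l0 unfolding f_def by (intro mult_right_mono mult_left_mono) auto
      also have "\<dots> = g + g * ln (real n) + (- g) * ln (real d)"
        unfolding g_def by (simp add: algebra_simps)
      finally have "exp (2 * real m * Qf R n d) \<le> exp (g + g * ln (real n) + (- g) * ln (real d))" by simp
      also have "\<dots> = exp g * real n powr g * real d powr (- g)"
        using n0 d1 by (simp add: exp_add[symmetric] powr_def mult_ac)
      finally show ?thesis unfolding H1_def H2_def using False by simp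
    qed
  qed
  have SG: "(\<Sum>d=1..n-1. exp (2 * real m * Qf R n d) - 1) \<le> y * real n powr (6 * K * \<alpha>) + (real n * (exp g / (1 - g) - 1) + 1)"
  proof -
    have "(\<Sum>d=1..n-1. exp (2 * real m * Qf R n d) - 1) \<le> (\<Sum>d=1..n-1. H1 d + H2 d)"
      by (rule sum_mono) (rule GH)
    also have "\<dots> = (\<Sum>d=1..n-1. H1 d) + (\<Sum>d=1..n-1. H2 d)" by (rule sum.distrib)
    also have "(\<Sum>d=1..n-1. H1 d) = real (card {d\<in>{1..n-1}. real d < y}) * real n powr (6 * K * \<alpha>)"
      unfolding H1_def by (simp add: sum.If_cases Int_def)
    also have "\<dots> \<le> y * real n powr (6 * K * \<alpha>)"
      using card_small[OF y0, of "n - 1"] by (intro mult_right_mono) auto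
    also have "(\<Sum>d=1..n-1. H2 d) \<le> real n * (exp g / (1 - g) - 1) + 1"
      unfolding H2_def using H2_sum[OF g0] n by simp
    finally show ?thesis by simp
  qed
  have "measure (cov_space R n) {\<omega>. cover_time n \<omega> < t}
     \<le> exp (- (ln 4 - 1) * t) + real n powr (6 * K * \<alpha> - 1)
        + 2 / real n * (y * real n powr (6 * K * \<alpha>) + (real n * (exp g / (1 - g) - 1) + 1))"
    using TB CB E1 E2 SG n0 by (smt (verit, ccfv_SIG) divide_nonneg_nonneg mult_left_mono of_nat_0_le_iff zero_le_numeral)
  also have "2 / real n * (y * real n powr (6 * K * \<alpha>) + (real n * (exp g / (1 - g) - 1) + 1))
      = 2 * real n powr (6 * K * \<alpha> - 1/2) + 2 * (exp g / (1 - g) - 1) + 2 / real n"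
  proof -
    have "y * real n powr (6 * K * \<alpha>) / real n = real n powr (6 * K * \<alpha> - 1/2)"
    proof -
      have e1: "y * real n powr (6 * K * \<alpha>) = real n powr (1/2 + 6 * K * \<alpha>)"
        unfolding y_def by (simp add: powr_add)
      have e2: "real n = real n powr 1" using n0 by simp
      have "real n powr (1/2 + 6 * K * \<alpha>) / real n powr 1 = real n powr (1/2 + 6 * K * \<alpha> - 1)"
        by (rule powr_diff[symmetric])
      then show ?thesis using e1 e2 by (simp add: algebra_simps)
    qed
    then show ?thesis using n0 by (simp add: field_simps)
  qed
  finally show ?thesis unfolding t_def f_def g_def by simp
qed



lemma get_bound:
  fixes X :: "nat \<Rightarrow> ereal"
  assumes "limsup X < \<infinity>"
  shows "\<exists>B::real. eventually (\<lambda>n. X n < ereal B) sequentially"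
proof -
  obtain k :: nat where "limsup X < ereal (real k)"
    using assms less_PInf_Ex_of_nat by auto
  then show ?thesis using Limsup_lessD by blast
qed

lemma fpos_ev:
  assumes rv: "RV (-1) (tailf R)"
  shows "eventually (\<lambda>n. 0 < tailf R (real n)) sequentially"
proof -
  have h: "\<forall>t>0. ((\<lambda>x. tailf R (x * t) / tailf R x) \<longlongrightarrow> t powr (-1)) at_top"
    using rv unfolding RV_def .
  have "((\<lambda>x. tailf R (x * 1) / tailf R x) \<longlongrightarrow> 1 powr (-1)) at_top"
    by (rule h[rule_format]) simp
  then have "eventually (\<lambda>x. tailf R (x * 1) / tailf R x \<noteq> 0) at_top"
    by (rule tendsto_imp_eventually_ne) simp
  then have "eventually (\<lambda>x. 0 < tailf R x) at_top"
    by eventually_elim (use tailf_nonneg in \<open>auto simp: less_le\<close>)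
  then show ?thesis
    using filterlim_real_sequentially unfolding filterlim_iff by blast
qed

lemma pp_ev: "eventually (\<lambda>n. pp R n \<le> 1/4) sequentially"
proof -
  have "eventually (\<lambda>i. tailf R (real i) < 1/8) sequentially"
    using tailf_lim[of R] by (rule order_tendstoD) simp
  then obtain N where N: "\<And>i. N \<le> i \<Longrightarrow> tailf R (real i) < 1/8"
    unfolding eventually_sequentially by blast
  have "pp R n \<le> 1/4" if n: "8 * N + 1 \<le> n" for n
  proof -
    have "(\<Sum>i=1..n. tailf R (real i)) \<le> (\<Sum>i=1..n. 1/8 + (if i < N then 1 else 0))"
    proof (rule sum_mono)
      fix i assume "i \<in> {1..n}"
      show "tailf R (real i) \<le> 1/8 + (if i < N then 1 else 0)"
        using N[of i] tailf_le1[of R "real i"] by (cases "i < N") auto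
    qed
    also have "\<dots> = real n / 8 + real (card {i\<in>{1..n}. i < N})"
      by (simp add: sum.distrib sum.If_cases Int_def)
    also have "real (card {i\<in>{1..n}. i < N}) \<le> real N"
    proof -
      have "card {i\<in>{1..n}. i < N} \<le> card {..<N}" by (rule card_mono) auto
      then show ?thesis by simp
    qed
    finally have "(\<Sum>i=1..n. tailf R (real i)) \<le> real n / 8 + real N" by simp
    also have "\<dots> \<le> real n / 4" using n by simp
    finally show ?thesis using n by (simp add: divide_le_eq)
  qed
  then show ?thesis unfolding eventually_sequentially by blast
qed



lemma ln4_gt1: "1 < ln (4::real)"
proof -
  have "exp 1 < (4::real)" using exp_le by linarith
  then have "ln (exp 1) < ln (4::real)" by (subst ln_less_cancel_iff) auto
  then show ?thesis by simp
qed

theorem mainTheorem10: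
  fixes R :: "nat pmf"
  assumes pos: "\<forall>k\<in>set_pmf R. 1 \<le> k"
    and rv: "RV (-1) (tailf R)"
    and c1: "\<forall>\<beta>. 0 < \<beta> \<and> \<beta> < 1 \<longrightarrow>
       limsup (\<lambda>n::nat. SUP x\<in>{real n powr \<beta> .. real n}.
          ereal (x * tailf R x / (real n * tailf R (real n)))) < \<infinity>"
    and c2: "\<forall>\<beta>. 0 < \<beta> \<and> \<beta> < 1 \<longrightarrow>
       limsup (\<lambda>n::nat. ereal ((\<Sum>i = 1..nat \<lfloor>real n powr \<beta>\<rfloor>. tailf R (real i))
          / (tailf R (real n) * real n * ln (real n)))) < \<infinity>"
  shows "((\<lambda>\<alpha>. limsup (\<lambda>n::nat. ereal (measure (cov_space R n)
            {\<omega> \<in> space (cov_space R n). cover_time n \<omega> * tailf R (real n) < \<alpha>})))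
          \<longlongrightarrow> 0) (at_right 0)"
proof -
  have fpos: "eventually (\<lambda>n. 0 < tailf R (real n)) sequentially" by (rule fpos_ev[OF rv])
  have n2: "eventually (\<lambda>n::nat. 2 \<le> n) sequentially" by (rule eventually_ge_at_top)
  have "limsup (\<lambda>n::nat. SUP x\<in>{real n powr (1/2) .. real n}.
          ereal (x * tailf R x / (real n * tailf R (real n)))) < \<infinity>"
    using c1 by auto
  then obtain B1 where ev1: "eventually (\<lambda>n::nat. (SUP x\<in>{real n powr (1/2) .. real n}.
          ereal (x * tailf R x / (real n * tailf R (real n)))) < ereal B1) sequentially"
    using get_bound by blast
  have "limsup (\<lambda>n::nat. ereal ((\<Sum>i = 1..nat \<lfloor>real n powr (1/2)\<rfloor>. tailf R (real i))
          / (tailf R (real n) * real n * ln (real n)))) < \<infinity>"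
    using c2 by auto
  then obtain B2 where ev2: "eventually (\<lambda>n::nat. ereal ((\<Sum>i = 1..nat \<lfloor>real n powr (1/2)\<rfloor>. tailf R (real i))
          / (tailf R (real n) * real n * ln (real n))) < ereal B2) sequentially"
    using get_bound by blast
  define C where "C = max B1 1"
  define C' where "C' = max B2 0"
  define K where "K = C + C'"
  have C1: "1 \<le> C" unfolding C_def by simp
  have C'0: "0 \<le> C'" unfolding C'_def by simp
  have KC: "C \<le> K" "0 < K" unfolding K_def using C1 C'0 by auto
  have evC: "eventually (\<lambda>n::nat. \<forall>x. real n powr (1/2) \<le> x \<and> x \<le> real n \<longrightarrow> x * tailf R x \<le> C * (real n * tailf R (real n))) sequentially"
    using ev1 fpos n2
  proof eventually_elim
    case (elim n)
    show ?case
    proof (intro allI impI)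
      fix x assume x: "real n powr (1/2) \<le> x \<and> x \<le> real n"
      have "ereal (x * tailf R x / (real n * tailf R (real n))) \<le> (SUP x\<in>{real n powr (1/2) .. real n}.
          ereal (x * tailf R x / (real n * tailf R (real n))))"
        using x by (intro SUP_upper) auto
      also have "\<dots> < ereal B1" using elim by simp
      finally have "x * tailf R x / (real n * tailf R (real n)) \<le> C" unfolding C_def by simp
      moreover have "0 < real n * tailf R (real n)" using elim by simp
      ultimately show "x * tailf R x \<le> C * (real n * tailf R (real n))" by (simp add: divide_le_eq)
    qed
  qed
  have evA1: "eventually (\<lambda>n::nat. pp R n \<le> K * tailf R (real n) * ln (real n)) sequentially"
    using ev2 evC fpos n2
  proof eventually_elim
    case (elim n)
    have D: "0 < tailf R (real n) * real n * ln (real n)" using elim by simp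
    have "(\<Sum>i = 1..nat \<lfloor>real n powr (1/2)\<rfloor>. tailf R (real i)) / (tailf R (real n) * real n * ln (real n)) \<le> C'"
      using elim unfolding C'_def by simp
    then have h2: "(\<Sum>i = 1..nat \<lfloor>real n powr (1/2)\<rfloor>. tailf R (real i)) \<le> C' * (tailf R (real n) * real n * ln (real n))"
      using D by (simp add: divide_le_eq)
    have "(\<Sum>i=1..n. tailf R (real i)) \<le> (C + C') * (real n * tailf R (real n) * ln (real n))"
      by (rule A1) (use elim C1 h2 in auto)
    then show ?case unfolding K_def using elim by (simp add: divide_le_eq mult_ac)
  qed
  have evA2: "eventually (\<lambda>n::nat. \<forall>d. real n powr (1/2) \<le> real d \<and> 1 \<le> d \<and> d + 1 \<le> n \<longrightarrow>
                 Qf R n d \<le> C * tailf R (real n) * (1 + ln (real n) - ln (real d))) sequentially"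
    using evC
  proof eventually_elim
    case (elim n)
    show ?case using A2[of C _ n R] elim C1 by auto
  qed
  define h where "h \<alpha> = 2 * (exp (6 * C * \<alpha>) / (1 - 6 * C * \<alpha>) - 1)" for \<alpha>
  define P where "P \<alpha> n = measure (cov_space R n)
            {\<omega> \<in> space (cov_space R n). cover_time n \<omega> * tailf R (real n) < \<alpha>}" for \<alpha> n
  have key: "limsup (\<lambda>n. ereal (P \<alpha> n)) \<le> ereal (h \<alpha>)" if a: "0 < \<alpha>" "12 * K * \<alpha> < 1" for \<alpha>
  proof -
    have aC: "12 * C * \<alpha> < 1" using a KC by (smt (verit) mult_right_mono)
    define Bn where "Bn n = exp (- (ln 4 - 1) * (\<alpha> / tailf R (real n))) + real n powr (6 * K * \<alpha> - 1)
        + 2 * real n powr (6 * K * \<alpha> - 1/2) + 2 / real n + h \<alpha>" for n :: nat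
    have fa: "eventually (\<lambda>n. tailf R (real n) \<le> \<alpha>) sequentially"
      using order_tendstoD(2)[OF tailf_lim[of R] a(1)] by eventually_elim simp
    have ev: "eventually (\<lambda>n. P \<alpha> n \<le> Bn n) sequentially"
      using fpos n2 fa pp_ev[of R] evA1 evA2
    proof eventually_elim
      case (elim n)
      have "{\<omega> \<in> space (cov_space R n). cover_time n \<omega> * tailf R (real n) < \<alpha>} = {\<omega>. cover_time n \<omega> < \<alpha> / tailf R (real n)}"
        using elim by (auto simp: less_divide_eq)
      then have "P \<alpha> n = measure (cov_space R n) {\<omega>. cover_time n \<omega> < \<alpha> / tailf R (real n)}"
        unfolding P_def by simp
      also have "\<dots> \<le> Bn n"
        unfolding Bn_def h_def by (rule B) (use elim pos a aC KC C1 in auto)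
      finally show ?case .
    qed
    have lim: "Bn \<longlonglongrightarrow> h \<alpha>"
    proof -
      have t1: "(\<lambda>n. exp (- (ln 4 - 1) * (\<alpha> / tailf R (real n)))) \<longlonglongrightarrow> 0"
      proof -
        have "LIM n sequentially. \<alpha> / tailf R (real n) :> at_top"
          by (rule LIM_at_top_divide[OF tendsto_const a(1) tailf_lim fpos])
        then have "LIM n sequentially. (- (ln 4 - 1)) * (\<alpha> / tailf R (real n)) :> at_bot"
          using ln4_gt1 by (intro filterlim_tendsto_neg_mult_at_bot[OF tendsto_const]) auto
        then show ?thesis by (rule filterlim_compose[OF exp_at_bot])
      qed
      have t2: "(\<lambda>n. real n powr (6 * K * \<alpha> - 1)) \<longlonglongrightarrow> 0"
        using a by (intro tendsto_neg_powr filterlim_real_sequentially) auto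
      have t3: "(\<lambda>n. real n powr (6 * K * \<alpha> - 1/2)) \<longlonglongrightarrow> 0"
        using a by (intro tendsto_neg_powr filterlim_real_sequentially) auto
      have t4: "(\<lambda>n. 2 / real n) \<longlonglongrightarrow> 0" by (rule lim_const_over_n)
      have "(\<lambda>n. exp (- (ln 4 - 1) * (\<alpha> / tailf R (real n))) + real n powr (6 * K * \<alpha> - 1)
        + 2 * real n powr (6 * K * \<alpha> - 1/2) + 2 / real n + h \<alpha>) \<longlonglongrightarrow> 0 + 0 + 2 * 0 + 0 + h \<alpha>"
        by (intro tendsto_add tendsto_mult t1 t2 t3 t4 tendsto_const)
      then show ?thesis unfolding Bn_def by simp
    qed
    have "limsup (\<lambda>n. ereal (P \<alpha> n)) \<le> limsup (\<lambda>n. ereal (Bn n))"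
      using ev by (intro Limsup_mono) (simp add: eventually_mono)
    also have "limsup (\<lambda>n. ereal (Bn n)) = ereal (h \<alpha>)"
      by (intro lim_imp_Limsup) (auto intro: lim)
    finally show ?thesis .
  qed
  have low: "0 \<le> limsup (\<lambda>n. ereal (P \<alpha> n))" for \<alpha>
    by (intro le_Limsup) (auto simp: P_def)
  have hlim: "((\<lambda>\<alpha>. ereal (h \<alpha>)) \<longlongrightarrow> 0) (at_right 0)"
  proof -
    have "(h \<longlongrightarrow> h 0) (at_right 0)"
      unfolding h_def by (intro tendsto_intros) auto
    then have "((\<lambda>\<alpha>. ereal (h \<alpha>)) \<longlongrightarrow> ereal (h 0)) (at_right 0)" by (rule tendsto_ereal)
    then show ?thesis by (simp add: h_def zero_ereal_def)
  qed
  have evk: "eventually (\<lambda>\<alpha>. limsup (\<lambda>n. ereal (P \<alpha> n)) \<le> ereal (h \<alpha>)) (at_right 0)"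
    unfolding eventually_at_right_field
  proof (intro exI conjI allI impI)
    show "(0::real) < 1 / (12 * K)" using KC by simp
    fix \<alpha> :: real assume "0 < \<alpha>" "\<alpha> < 1 / (12 * K)"
    then show "limsup (\<lambda>n. ereal (P \<alpha> n)) \<le> ereal (h \<alpha>)"
      using KC by (intro key) (auto simp: less_divide_eq mult_ac)
  qed
  have "((\<lambda>\<alpha>. limsup (\<lambda>n. ereal (P \<alpha> n))) \<longlongrightarrow> 0) (at_right 0)"
    by (rule tendsto_sandwich[OF _ evk tendsto_const hlim]) (simp add: low)
  then show ?thesis unfolding P_def .
qed

end
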